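(* For every composition $\alpha$, $\pi(S^*_\alpha)=p_\alpha$.
   Context: $\mathrm{QSym}$ is the Hopf algebra of quasisymmetric functions with monomial basis $M_\alpha=\sum_{i_1<\cdots<i_\ell}x_{i_1}^{\alpha_1}\cdots x_{i_\ell}^{\alpha_\ell}$, product the ordinary product and coproduct $\Delta(M_\alpha)=\sum_{\beta\gamma=\alpha}M_\beta\otimes M_\gamma$. For compositions $\alpha,\beta$ of $n$, $\beta\le\alpha$ means the set of partial sums $\{\beta_1,\beta_1+\beta_2,\dots\}$ (excluding the total) is contained in that of $\alpha$. Shuffle functions: for $\alpha=(\alpha_1,\dots,\alpha_\ell)$ let $\mathrm{OtE}(\alpha)=\{i:\alpha_i\text{ odd},\ \alpha_{i+1}\text{ even}\}=\{i_1<\cdots<i_k\}$ and $m_o(\alpha)=(\alpha_1+\cdots+\alpha_{i_1},\ \alpha_{i_1+1}+\cdots+\alpha_{i_2},\ \dots,\ \alpha_{i_k+1}+\cdots+\alpha_\ell)$. For $m_o(\alpha)\le\beta\le\alpha$, each part $\beta_i$ is a sum of a block of consecutive parts of $\alpha$; with $\mathrm{O}(i),\mathrm{E}(i)$ the numbers of odd and even parts of that block put $c_\alpha^\beta=\prod_i\frac{1}{\mathrm{O}(i)!\mathrm{E}(i)!}$. Then $S_\alpha=\sum_{m_o(\alpha)\le\beta\le\alpha}c_\alpha^\beta M_\beta$; these form a basis of $\mathrm{QSym}$. $\mathrm{NSym}$ is the graded dual Hopf algebra of $\mathrm{QSym}$; it is the free associative algebra on $H_1,H_2,\dots$ with $\Delta(H_n)=\sum_{i+j=n}H_i\otimes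 H_j$, and $H_\alpha=H_{\alpha_1}\cdots H_{\alpha_\ell}$ is the basis dual to $\{M_\alpha\}$. $\{S^*_\alpha\}$ is the basis of $\mathrm{NSym}$ dual to $\{S_\alpha\}$: $\langle S^*_\alpha,S_\beta\rangle=\delta_{\alpha,\beta}$. $\mathrm{Sym}\subseteq\mathrm{QSym}$ is the ring of symmetric functions; $h_n=\sum_{\alpha\models n}M_\alpha$, $p_n=\frac1n M_{(n)}$ (scaled power sums), $p_\alpha=p_{\alpha_1}\cdots p_{\alpha_\ell}$. $\pi:\mathrm{NSym}\to\mathrm{Sym}$ is the algebra morphism with $\pi(H_n)=h_n$. *)

theory Defs
  imports Complex_Main
begin

(* Formal power series in the variables x_0, x_1, ... over the rationals:
   a monomial is an exponent vector nat => nat (finite support),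
   a series is a coefficient function on monomials. *)
type_synonym monom = "nat \<Rightarrow> nat"
type_synonym series = "monom \<Rightarrow> rat"

definition smult :: "series \<Rightarrow> series \<Rightarrow> series" where
  "smult f g = (\<lambda>m. \<Sum>a\<in>{a. \<forall>i. a i \<le> m i}. f a * g (\<lambda>i. m i - a i))"

definition sone :: series where
  "sone = (\<lambda>m. if m = (\<lambda>_. 0) then 1 else 0)"

definition sprod_list :: "series list \<Rightarrow> series" where
  "sprod_list fs = foldr smult fs sone"

definition sscale :: "rat \<Rightarrow> series \<Rightarrow> series" where
  "sscale c f = (\<lambda>m. c * f m)"

definition is_comp :: "nat list \<Rightarrow> bool" where
  "is_comp \<alpha> \<longleftrightarrow> (\<forall>a\<in>set \<alpha>. 0 < a)"

definition comps :: "nat \<Rightarrow> nat list set" where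
  "comps n = {\<alpha>. is_comp \<alpha> \<and> sum_list \<alpha> = n}"

definition M :: "nat list \<Rightarrow> series" where
  "M \<alpha> = (\<lambda>m. if finite {i. m i \<noteq> 0} \<and>
                  map m (sorted_list_of_set {i. m i \<noteq> 0}) = \<alpha> then 1 else 0)"

definition h :: "nat \<Rightarrow> series" where
  "h n = (\<lambda>m. \<Sum>\<alpha>\<in>comps n. M \<alpha> m)"

definition hc :: "nat list \<Rightarrow> series" where
  "hc \<alpha> = sprod_list (map h \<alpha>)"

definition p :: "nat \<Rightarrow> series" where
  "p n = sscale (1 / of_nat n) (M [n])"

definition pc :: "nat list \<Rightarrow> series" where
  "pc \<alpha> = sprod_list (map p \<alpha>)"

definition psums :: "nat list \<Rightarrow> nat set" where
  "psums \<alpha> = {sum_list (take k \<alpha>) | k. 0 < k \<and> k < length \<alpha>}"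

(* beta \<le> alpha (refinement order) for compositions of the same n *)
definition comp_le :: "nat list \<Rightarrow> nat list \<Rightarrow> bool" where
  "comp_le \<beta> \<alpha> \<longleftrightarrow> psums \<beta> \<subseteq> psums \<alpha>"

(* OtE(alpha), 1-indexed: alpha_i odd and alpha_{i+1} even *)
definition OtE :: "nat list \<Rightarrow> nat set" where
  "OtE \<alpha> = {i. 1 \<le> i \<and> i < length \<alpha> \<and> odd (\<alpha> ! (i - 1)) \<and> even (\<alpha> ! i)}"

(* m_o(alpha): the composition of |alpha| whose partial sums are those at the OtE positions *)
definition mo :: "nat list \<Rightarrow> nat list" where
  "mo \<alpha> = (let S = sorted_list_of_set ((\<lambda>i. sum_list (take i \<alpha>)) ` OtE \<alpha>) @ [sum_list \<alpha>]
           in map (\<lambda>j. S ! j - (if j = 0 then 0 else S ! (j - 1))) [0..<length S])"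

fun blocks :: "nat list \<Rightarrow> nat list \<Rightarrow> nat list list" where
  "blocks [] as = []"
| "blocks (b # bs) as =
     (let k = (LEAST k. sum_list (take k as) = b) in take k as # blocks bs (drop k as))"

definition cblock :: "nat list \<Rightarrow> rat" where
  "cblock B = 1 / (of_nat (fact (length (filter odd B))) * of_nat (fact (length (filter even B))))"

definition c :: "nat list \<Rightarrow> nat list \<Rightarrow> rat" where
  "c \<alpha> \<beta> = (\<Prod>B\<leftarrow>blocks \<beta> \<alpha>. cblock B)"

definition Scoef :: "nat list \<Rightarrow> nat list \<Rightarrow> rat" where
  "Scoef \<alpha> \<beta> = (if \<beta> \<in> comps (sum_list \<alpha>) \<and> comp_le (mo \<alpha>) \<beta> \<and> comp_le \<beta> \<alpha>
                 then c \<alpha> \<beta> else 0)"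

definition S :: "nat list \<Rightarrow> series" where
  "S \<alpha> = (\<lambda>m. \<Sum>\<beta>\<in>comps (sum_list \<alpha>). Scoef \<alpha> \<beta> * M \<beta> m)"

(* NSym: elements are finite rational combinations of the basis H_gamma (gamma a composition),
   represented by their coefficient functions. *)
definition is_nsym :: "(nat list \<Rightarrow> rat) \<Rightarrow> bool" where
  "is_nsym f \<longleftrightarrow> finite {\<gamma>. f \<gamma> \<noteq> 0} \<and> (\<forall>\<gamma>. f \<gamma> \<noteq> 0 \<longrightarrow> is_comp \<gamma>)"

(* pairing <f, S_beta>, using <H_gamma, M_delta> = delta_{gamma,delta} *)
definition pair_S :: "(nat list \<Rightarrow> rat) \<Rightarrow> nat list \<Rightarrow> rat" where
  "pair_S f \<beta> = (\<Sum>\<gamma>\<in>{\<gamma>. f \<gamma> \<noteq> 0}. f \<gamma> * Scoef \<beta> \<gamma>)"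

definition Sstar :: "nat list \<Rightarrow> (nat list \<Rightarrow> rat)" where
  "Sstar \<alpha> = (THE f. is_nsym f \<and> (\<forall>\<beta>. is_comp \<beta> \<longrightarrow> pair_S f \<beta> = (if \<beta> = \<alpha> then 1 else 0)))"

(* pi : NSym -> Sym, the algebra map with H_n |-> h_n, so H_gamma |-> h_gamma *)
definition pi_map :: "(nat list \<Rightarrow> rat) \<Rightarrow> series" where
  "pi_map f = (\<lambda>m. \<Sum>\<gamma>\<in>{\<gamma>. f \<gamma> \<noteq> 0}. f \<gamma> * hc \<gamma> m)"

end

theory Submission
  imports Defs "HOL-Computational_Algebra.Formal_Power_Series"
begin

unbundle fps_syntax


definition good :: "series \<Rightarrow> bool" where
  "good f \<longleftrightarrow> (\<forall>m. infinite {i. m i \<noteq> 0} \<longrightarrow> f m = 0)"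

definition box :: "monom \<Rightarrow> monom set" where
  "box m = {a. \<forall>i. a i \<le> m i}"

lemma smult_box: "smult f g m = (\<Sum>a\<in>box m. f a * g (\<lambda>i. m i - a i))"
  by (simp add: smult_def box_def)

lemma finite_box:
  assumes "finite {i. m i \<noteq> 0}"
  shows "finite (box m)"
proof -
  let ?S = "{i. m i \<noteq> 0}"
  have "box m \<subseteq> (\<lambda>f i. if i \<in> ?S then f i else 0) ` (PiE ?S (\<lambda>i. {0..m i}))"
  proof
    fix a assume a: "a \<in> box m"
    let ?f = "restrict a ?S"
    have "?f \<in> PiE ?S (\<lambda>i. {0..m i})" using a by (auto simp: box_def)
    moreover have "a = (\<lambda>i. if i \<in> ?S then ?f i else 0)"
    proof (rule ext)
      fix i
      have "a i \<le> m i" using a by (simp add: box_def)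
      then show "a i = (if i \<in> ?S then ?f i else 0)" by auto
    qed
    ultimately show "a \<in> (\<lambda>f i. if i \<in> ?S then f i else 0) ` (PiE ?S (\<lambda>i. {0..m i}))" by blast
  qed
  moreover have "finite (PiE ?S (\<lambda>i. {0..m i}))" using assms by (intro finite_PiE) auto
  ultimately show ?thesis by (meson finite_imageI finite_subset)
qed

lemma infinite_box:
  assumes "infinite {i. m i \<noteq> 0}"
  shows "infinite (box m)"
proof
  assume fin: "finite (box m)"
  let ?g = "\<lambda>i. (\<lambda>j. if j = i then m i else 0)"
  have "?g ` {i. m i \<noteq> 0} \<subseteq> box m" by (auto simp: box_def)
  moreover have "inj_on ?g {i. m i \<noteq> 0}"
  proof (rule inj_onI)
    fix x y assume "x \<in> {i. m i \<noteq> 0}" "?g x = ?g y"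
    then show "x = y" by (metis (mono_tags, lifting) mem_Collect_eq)
  qed
  ultimately have "finite {i. m i \<noteq> 0}"
    using fin by (meson finite_imageD finite_subset)
  with assms show False by simp
qed

lemma smult_inf: "infinite {i. m i \<noteq> 0} \<Longrightarrow> smult f g m = 0"
  by (simp add: smult_box infinite_box)

lemma good_smult: "good (smult f g)"
  by (simp add: good_def smult_inf)

lemma good_sone: "good sone"
  by (auto simp: good_def sone_def)

lemma box_fin_supp: "finite {i. m i \<noteq> 0} \<Longrightarrow> a \<in> box m \<Longrightarrow> finite {i. a i \<noteq> 0}"
proof (rule finite_subset[of _ "{i. m i \<noteq> 0}"])
  assume "a \<in> box m"
  then have "\<forall>i. a i \<le> m i" by (simp add: box_def)
  show "{i. a i \<noteq> 0} \<subseteq> {i. m i \<noteq> 0}"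
  proof (rule subsetI)
    fix x assume "x \<in> {i. a i \<noteq> 0}"
    moreover have "a x \<le> m x" using \<open>\<forall>i. a i \<le> m i\<close> by blast
    ultimately show "x \<in> {i. m i \<noteq> 0}" by simp
  qed
qed

lemma finite_box2: "finite {i. m i \<noteq> 0} \<Longrightarrow> a \<in> box m \<Longrightarrow> finite (box a)"
  by (rule finite_box) (rule box_fin_supp)

lemma finite_box3: "finite {i. m i \<noteq> 0} \<Longrightarrow> finite (box (\<lambda>i. m i - x i))"
  by (rule finite_box, erule finite_subset[rotated]) auto

lemma smult_comm: "smult f g m = smult g f m"
proof (cases "finite {i. m i \<noteq> 0}")
  case True
  show ?thesis unfolding smult_box
  proof (rule sum.reindex_bij_witness[of _ "\<lambda>a i. m i - a i" "\<lambda>a i. m i - a i"])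
    fix a assume "a \<in> box m" then show "(\<lambda>i. m i - (m i - a i)) = a" by (auto simp: box_def fun_eq_iff)
  next
    fix a assume "a \<in> box m" then show "(\<lambda>i. m i - a i) \<in> box m" by (auto simp: box_def)
  next
    fix a assume "a \<in> box m" then show "(\<lambda>i. m i - (m i - a i)) = a" by (auto simp: box_def fun_eq_iff)
  next
    fix a assume "a \<in> box m" then show "(\<lambda>i. m i - a i) \<in> box m" by (auto simp: box_def)
  next
    fix a assume "a \<in> box m" then show "g (\<lambda>i. m i - a i) * f (\<lambda>i. m i - (\<lambda>i. m i - a i) i) = f a * g (\<lambda>i. m i - a i)"
      by (simp add: box_def mult.commute)
  qed
next
  case False then show ?thesis by (simp add: smult_inf)
qed

lemma smult_assoc: "smult (smult f g) k m = smult f (smult g k) m"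
proof (cases "finite {i. m i \<noteq> 0}")
  case True
  have "smult (smult f g) k m = (\<Sum>a\<in>box m. \<Sum>b\<in>box a. f b * g (\<lambda>i. a i - b i) * k (\<lambda>i. m i - a i))"
    unfolding smult_box by (simp add: sum_distrib_right)
  also have "\<dots> = (\<Sum>(a,b)\<in>Sigma (box m) box. f b * g (\<lambda>i. a i - b i) * k (\<lambda>i. m i - a i))"
    using True by (subst sum.Sigma) (auto simp del: neq0_conv intro: finite_box finite_box2)
  also have "\<dots> = (\<Sum>(b,d)\<in>Sigma (box m) (\<lambda>b. box (\<lambda>i. m i - b i)). f b * (g d * k (\<lambda>i. m i - b i - d i)))"
  proof (rule sum.reindex_bij_witness[of _ "\<lambda>(b,d). (\<lambda>i. b i + d i, b)" "\<lambda>(a,b). (b, \<lambda>i. a i - b i)"])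
    fix x assume x: "x \<in> Sigma (box m) box"
    obtain a b where [simp]: "x = (a,b)" by fastforce
    from x have ab: "\<forall>i. a i \<le> m i" "\<forall>i. b i \<le> a i" by (auto simp: box_def)
    show "(case case x of (a, b) \<Rightarrow> (b, \<lambda>i. a i - b i) of (b, d) \<Rightarrow> (\<lambda>i. b i + d i, b)) = x"
      using ab by (auto simp: fun_eq_iff)
    show "(case x of (a, b) \<Rightarrow> (b, \<lambda>i. a i - b i)) \<in> Sigma (box m) (\<lambda>b. box (\<lambda>i. m i - b i))"
      using ab by (auto simp: box_def intro: le_trans diff_le_mono)
    have e1: "(\<lambda>i. m i - b i - (a i - b i)) = (\<lambda>i. m i - a i)" using ab by (auto simp: fun_eq_iff)
    show "(case case x of (a, b) \<Rightarrow> (b, \<lambda>i. a i - b i) of (b, d) \<Rightarrow> f b * (g d * k (\<lambda>i. m i - b i - d i))) =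
         (case x of (a, b) \<Rightarrow> f b * g (\<lambda>i. a i - b i) * k (\<lambda>i. m i - a i))"
      using e1 by (simp add: mult.assoc)
  next
    fix y assume y: "y \<in> Sigma (box m) (\<lambda>b. box (\<lambda>i. m i - b i))"
    obtain b d where [simp]: "y = (b,d)" by fastforce
    from y have bc: "\<forall>i. b i \<le> m i" "\<forall>i. d i \<le> m i - b i" by (auto simp: box_def)
    show "(case case y of (b, d) \<Rightarrow> (\<lambda>i. b i + d i, b) of (a, b) \<Rightarrow> (b, \<lambda>i. a i - b i)) = y"
      by (simp add: fun_eq_iff)
    show "(case y of (b, d) \<Rightarrow> (\<lambda>i. b i + d i, b)) \<in> Sigma (box m) box"
      using bc by (auto simp: box_def) (metis le_diff_conv2 add.commute)
  qed
  also have "\<dots> = smult f (smult g k) m"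
    unfolding smult_box using True
    by (subst sum.Sigma[symmetric]) (auto simp del: neq0_conv intro: finite_box finite_box3 simp: sum_distrib_left)
  finally show ?thesis .
next
  case False then show ?thesis by (simp add: smult_inf)
qed

lemma smult_sone: "good f \<Longrightarrow> smult sone f m = f m"
proof (cases "finite {i. m i \<noteq> 0}")
  case True
  have z: "(\<lambda>_. 0) \<in> box m" by (simp add: box_def)
  have "smult sone f m = (\<Sum>a\<in>box m. if a = (\<lambda>_. 0) then f (\<lambda>i. m i - a i) else 0)"
    unfolding smult_box sone_def by (intro sum.cong) auto
  also have "\<dots> = f m" using True z by (simp add: finite_box)
  finally show ?thesis .
next
  case False
  assume "good f" then show ?thesis using False by (simp add: smult_inf good_def)
qed

lemma smult_add: "smult f (\<lambda>m. g m + k m) m = smult f g m + smult f k m"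
  by (simp add: smult_def distrib_left sum.distrib)

typedef ser = "{f. good f}"
  by (rule exI[of _ "\<lambda>_. 0"]) (simp add: good_def)

setup_lifting type_definition_ser

instantiation ser :: comm_ring_1
begin
lift_definition zero_ser :: ser is "\<lambda>_. 0" by (simp add: good_def)
lift_definition one_ser :: ser is sone by (rule good_sone)
lift_definition plus_ser :: "ser \<Rightarrow> ser \<Rightarrow> ser" is "\<lambda>f g m. f m + g m" by (simp add: good_def)
lift_definition minus_ser :: "ser \<Rightarrow> ser \<Rightarrow> ser" is "\<lambda>f g m. f m - g m" by (simp add: good_def)
lift_definition uminus_ser :: "ser \<Rightarrow> ser" is "\<lambda>f m. - f m" by (simp add: good_def)
lift_definition times_ser :: "ser \<Rightarrow> ser \<Rightarrow> ser" is smult by (rule good_smult)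
instance
proof
  fix a b c :: ser
  show "a * b * c = a * (b * c)" by transfer (simp add: smult_assoc fun_eq_iff)
  show "a * b = b * a" by transfer (simp add: smult_comm fun_eq_iff)
  show "1 * a = a" by transfer (simp add: smult_sone fun_eq_iff)
  show "(a + b) * c = a * c + b * c" by transfer (simp add: fun_eq_iff smult_def distrib_right sum.distrib)
  show "a + b + c = a + (b + c)" by transfer (simp add: fun_eq_iff)
  show "a + b = b + a" by transfer (simp add: fun_eq_iff)
  show "0 + a = a" by transfer (simp add: fun_eq_iff)
  show "- a + a = 0" by transfer (simp add: fun_eq_iff)
  show "a - b = a + - b" by transfer (simp add: fun_eq_iff)
  show "(0::ser) \<noteq> 1" by transfer (auto simp: fun_eq_iff sone_def dest: spec[of _ "\<lambda>_. 0"])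
qed
end





lemma Rep_good: "good (Rep_ser x)"
  using Rep_ser by simp

definition rs :: "rat \<Rightarrow> ser" where "rs q = Abs_ser (\<lambda>m. q * sone m)"

lemma good_scal: "good (\<lambda>m. q * sone m)" by (auto simp: good_def sone_def)

lemma Rep_rs: "Rep_ser (rs q) = (\<lambda>m. q * sone m)"
  unfolding rs_def using good_scal by (simp add: Abs_ser_inverse)

lemma Rep_rs_mult: "Rep_ser (rs q * x) = (\<lambda>m. q * Rep_ser x m)"
proof
  fix m
  have "Rep_ser (rs q * x) m = smult (\<lambda>m. q * sone m) (Rep_ser x) m"
    by (simp add: times_ser.rep_eq Rep_rs)
  also have "\<dots> = q * smult sone (Rep_ser x) m"
    by (simp add: smult_def sum_distrib_left mult.assoc)
  also have "\<dots> = q * Rep_ser x m" by (simp add: smult_sone Rep_good)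
  finally show "Rep_ser (rs q * x) m = q * Rep_ser x m" .
qed

lemma rs_mult: "rs (a * b) = rs a * rs b"
  by (simp add: Rep_ser_inject[symmetric] Rep_rs_mult Rep_rs fun_eq_iff)

lemma rs_add: "rs (a + b) = rs a + rs b"
  by (simp add: Rep_ser_inject[symmetric] plus_ser.rep_eq Rep_rs fun_eq_iff algebra_simps)

lemma rs_1: "rs 1 = 1"
  by (simp add: Rep_ser_inject[symmetric] one_ser.rep_eq Rep_rs fun_eq_iff)

lemma rs_0: "rs 0 = 0"
  by (simp add: Rep_ser_inject[symmetric] zero_ser.rep_eq Rep_rs fun_eq_iff)

lemma rs_of_nat: "rs (of_nat n) = of_nat n"
  by (induct n) (simp_all add: rs_0 rs_add rs_1)

lemma rs_cancel: "n > 0 \<Longrightarrow> rs (1 / of_nat n) * of_nat n = 1"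
  by (simp add: rs_of_nat[symmetric] rs_mult[symmetric] rs_1)

lemma of_nat_cancel_ser: "n > 0 \<Longrightarrow> of_nat n * (x::ser) = of_nat n * y \<Longrightarrow> x = y"
  by (metis mult.assoc mult_1 rs_cancel)

definition Exs :: "ser fps \<Rightarrow> ser fps" where
  "Exs A = Abs_fps (\<lambda>n. \<Sum>l\<le>n. rs (1 / fact l) * (A^l) $ n)"

definition Tr :: "ser fps \<Rightarrow> nat \<Rightarrow> ser fps" where
  "Tr A N = (\<Sum>l\<le>N. fps_const (rs (1 / fact l)) * A^l)"

lemma Tr_nth: "(Tr A N) $ i = (\<Sum>l\<le>N. rs (1 / fact l) * (A^l) $ i)"
  by (simp add: Tr_def fps_sum_nth)

lemma Tr_Ex: assumes "A $ 0 = 0" "i \<le> N" shows "(Tr A N) $ i = (Exs A) $ i"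
proof -
  have "(\<Sum>l\<le>N. rs (1 / fact l) * (A^l) $ i) = (\<Sum>l\<le>i. rs (1 / fact l) * (A^l) $ i)"
    by (rule sum.mono_neutral_right) (use assms startsby_zero_power_prefix[OF assms(1)] in auto)
  then show ?thesis by (simp add: Tr_nth Exs_def)
qed

lemma Tr_deriv: "fps_deriv (Tr A (Suc N)) = Tr A N * fps_deriv A"
proof -
  have "fps_deriv (Tr A (Suc N)) = (\<Sum>l\<le>Suc N. fps_const (rs (1 / fact l)) * (fps_const (of_nat l) * fps_deriv A * A ^ (l - 1)))"
    by (simp only: Tr_def fps_deriv_sum fps_deriv_mult_const_left fps_deriv_power)
  also have "\<dots> = (\<Sum>l\<le>N. fps_const (rs (1 / fact (Suc l))) * (fps_const (of_nat (Suc l)) * fps_deriv A * A ^ l))"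
    by (subst sum.atMost_Suc_shift) simp
  also have "\<dots> = (\<Sum>l\<le>N. fps_const (rs (1 / fact l)) * A ^ l * fps_deriv A)"
  proof (rule sum.cong[OF refl])
    fix l
    have "rs (1 / fact (Suc l)) * of_nat (Suc l) = rs (1 / fact l)"
      by (simp add: rs_of_nat[symmetric] rs_mult[symmetric] del: of_nat_Suc)
    then have "fps_const (rs (1 / fact (Suc l))) * fps_const (of_nat (Suc l)) = fps_const (rs (1 / fact l))"
      by (simp del: of_nat_Suc)
    then show "fps_const (rs (1 / fact (Suc l))) * (fps_const (of_nat (Suc l)) * fps_deriv A * A ^ l) =
          fps_const (rs (1 / fact l)) * A ^ l * fps_deriv A"
      by (metis (no_types, lifting) mult.assoc mult.commute)
  qed
  also have "\<dots> = Tr A N * fps_deriv A" by (simp add: Tr_def sum_distrib_right)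
  finally show ?thesis .
qed

lemma Ex_deriv: assumes "A $ 0 = 0" shows "fps_deriv (Exs A) = fps_deriv A * Exs A"
proof (rule fps_ext)
  fix n
  have "fps_deriv (Exs A) $ n = of_nat (n+1) * (Tr A (Suc n)) $ (n+1)"
    using Tr_Ex[OF assms, of "n+1" "Suc n"] by simp
  also have "\<dots> = (Tr A n * fps_deriv A) $ n"
    by (simp only: Tr_deriv[symmetric] fps_deriv_nth)
  also have "\<dots> = (\<Sum>i=0..n. (Exs A) $ i * (fps_deriv A) $ (n - i))"
    by (simp add: fps_mult_nth Tr_Ex[OF assms])
  also have "\<dots> = (Exs A * fps_deriv A) $ n"
    by (simp only: fps_mult_nth)
  also have "\<dots> = (fps_deriv A * Exs A) $ n"
    by (simp only: mult.commute)
  finally show "fps_deriv (Exs A) $ n = (fps_deriv A * Exs A) $ n" .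
qed

lemma Ex_0: "(Exs A) $ 0 = 1"
  by (simp add: Exs_def rs_1)

lemma ode_unique:
  fixes F G D :: "ser fps"
  assumes "F $ 0 = G $ 0" "fps_deriv F = D * F" "fps_deriv G = D * G"
  shows "F = G"
proof -
  have "\<forall>i\<le>n. F $ i = G $ i" for n
  proof (induct n)
    case 0 then show ?case using assms by simp
  next
    case (Suc n)
    have "of_nat (Suc n) * F $ (Suc n) = (D * F) $ n"
      using fps_deriv_nth[of F n] assms(2) by simp
    also have "\<dots> = (D * G) $ n"
      using Suc by (simp add: fps_mult_nth)
    also have "\<dots> = of_nat (Suc n) * G $ (Suc n)"
      using fps_deriv_nth[of G n] assms(3) by simp
    finally have "F $ (Suc n) = G $ (Suc n)" by (rule of_nat_cancel_ser[rotated]) simp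
    with Suc show ?case by (auto simp: le_Suc_eq)
  qed
  then show ?thesis by (intro fps_ext) blast
qed

lemma Ex_add: assumes "A $ 0 = 0" "B $ 0 = 0" shows "Exs (A + B) = Exs A * Exs B"
proof (rule ode_unique)
  show "(Exs (A + B)) $ 0 = (Exs A * Exs B) $ 0" by (simp add: Ex_0)
  show "fps_deriv (Exs (A + B)) = fps_deriv (A + B) * Exs (A + B)"
    using assms by (intro Ex_deriv) simp
  show "fps_deriv (Exs A * Exs B) = fps_deriv (A + B) * (Exs A * Exs B)"
    using Ex_deriv[OF assms(1)] Ex_deriv[OF assms(2)] by (simp add: algebra_simps)
qed





lemma len_le_sum: "is_comp xs \<Longrightarrow> length xs \<le> sum_list xs"
  by (induct xs) (auto simp: is_comp_def)

lemma finite_comps: "finite (comps n)"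
proof (rule finite_subset)
  show "comps n \<subseteq> {xs. set xs \<subseteq> {0..n} \<and> length xs \<le> n}"
  proof
    fix xs assume "xs \<in> comps n"
    then have "is_comp xs" "sum_list xs = n" by (auto simp: comps_def)
    then show "xs \<in> {xs. set xs \<subseteq> {0..n} \<and> length xs \<le> n}"
      using len_le_sum[of xs] member_le_sum_list[of _ xs] by auto
  qed
  show "finite {xs. set xs \<subseteq> {0..n} \<and> length xs \<le> n}" by (rule finite_lists_length_le) simp
qed

lemma power_comps:
  fixes A :: "'a::comm_ring_1 fps"
  assumes A0: "A $ 0 = 0"
  shows "(A^l) $ n = (\<Sum>\<beta>\<in>{\<beta>\<in>comps n. length \<beta> = l}. prod_list (map (\<lambda>k. A $ k) \<beta>))"
proof (induct l arbitrary: n)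
  case 0
  have "{\<beta>\<in>comps n. length \<beta> = 0} = (if n = 0 then {[]} else {})"
    by (auto simp: comps_def is_comp_def)
  then show ?case by simp
next
  case (Suc l)
  have "(A^Suc l) $ n = (\<Sum>i=0..n. A $ i * (A^l) $ (n - i))"
    by (simp add: fps_mult_nth)
  also have "\<dots> = (\<Sum>i\<in>{1..n}. A $ i * (A^l) $ (n - i))"
    by (rule sum.mono_neutral_right) (auto simp: A0 Suc_le_eq)
  also have "\<dots> = (\<Sum>i\<in>{1..n}. \<Sum>\<beta>'\<in>{\<beta>\<in>comps (n-i). length \<beta> = l}. A $ i * prod_list (map (\<lambda>k. A $ k) \<beta>'))"
    by (simp add: Suc sum_distrib_left)
  also have "\<dots> = (\<Sum>(i,\<beta>')\<in>Sigma {1..n} (\<lambda>i. {\<beta>\<in>comps (n-i). length \<beta> = l}). A $ i * prod_list (map (\<lambda>k. A $ k) \<beta>'))"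
    by (rule sum.Sigma) (auto simp: finite_comps)
  also have "\<dots> = (\<Sum>\<beta>\<in>{\<beta>\<in>comps n. length \<beta> = Suc l}. prod_list (map (\<lambda>k. A $ k) \<beta>))"
  proof (rule sum.reindex_bij_witness[where i="\<lambda>\<beta>. (hd \<beta>, tl \<beta>)" and j="\<lambda>(i,\<beta>'). i#\<beta>'"])
    fix a assume "a \<in> Sigma {1..n} (\<lambda>i. {\<beta>\<in>comps (n-i). length \<beta> = l})"
    then obtain i b where a: "a = (i,b)" "1 \<le> i" "i \<le> n" "b \<in> comps (n-i)" "length b = l" by auto
    show "(case case a of (i, \<beta>') \<Rightarrow> i # \<beta>' of \<beta> \<Rightarrow> (hd \<beta>, tl \<beta>)) = a" using a by simp
    show "(case a of (i, \<beta>') \<Rightarrow> i # \<beta>') \<in> {\<beta> \<in> comps n. length \<beta> = Suc l}"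
      using a by (auto simp: comps_def is_comp_def)
    show "prod_list (map (\<lambda>k. A $ k) (case a of (i, \<beta>') \<Rightarrow> i # \<beta>')) =
          (case a of (i, \<beta>') \<Rightarrow> A $ i * prod_list (map (\<lambda>k. A $ k) \<beta>'))" using a by simp
  next
    fix b assume b: "b \<in> {\<beta> \<in> comps n. length \<beta> = Suc l}"
    then obtain x xs where bx: "b = x # xs" by (cases b) auto
    show "(case (hd b, tl b) of (i, \<beta>') \<Rightarrow> i # \<beta>') = b" using bx by simp
    show "(hd b, tl b) \<in> Sigma {1..n} (\<lambda>i. {\<beta> \<in> comps (n - i). length \<beta> = l})"
      using b bx by (auto simp: comps_def is_comp_def)
  qed
  finally show ?case .
qed

lemma Ex_comps:
  assumes A0: "A $ 0 = 0"
  shows "(Exs A) $ n = (\<Sum>\<beta>\<in>comps n. rs (1 / fact (length \<beta>)) * prod_list (map (\<lambda>k. A $ k) \<beta>))"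
proof -
  have "(Exs A) $ n = (\<Sum>l\<le>n. \<Sum>\<beta>\<in>{\<beta>\<in>comps n. length \<beta> = l}. rs (1 / fact (length \<beta>)) * prod_list (map (\<lambda>k. A $ k) \<beta>))"
    unfolding Exs_def fps_nth_Abs_fps power_comps[OF A0] sum_distrib_left
    by (intro sum.cong refl) auto
  also have "\<dots> = (\<Sum>\<beta>\<in>comps n. rs (1 / fact (length \<beta>)) * prod_list (map (\<lambda>k. A $ k) \<beta>))"
    using finite_comps[of n] by (intro sum.group) (auto simp: comps_def intro: len_le_sum)
  finally show ?thesis .
qed

definition deg :: "monom \<Rightarrow> nat" where "deg m = sum m {i. m i \<noteq> 0}"

definition ev :: "nat \<Rightarrow> nat \<Rightarrow> monom" where "ev i k = (\<lambda>j. if j = i then k else 0)"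

lemma deg_superset: "finite U \<Longrightarrow> {i. m i \<noteq> 0} \<subseteq> U \<Longrightarrow> deg m = sum m U"
  unfolding deg_def by (rule sum.mono_neutral_left) auto

lemma h_eval: assumes fin: "finite {i. m i \<noteq> 0}" shows "h j m = (if deg m = j then 1 else 0)"
proof -
  let ?a = "map m (sorted_list_of_set {i. m i \<noteq> 0})"
  have "h j m = (\<Sum>\<alpha>\<in>comps j. if ?a = \<alpha> then 1 else 0)"
    unfolding h_def M_def using fin by (intro sum.cong) auto
  also have "\<dots> = (if ?a \<in> comps j then 1 else 0)"
    using finite_comps by (simp add: sum.delta)
  also have "?a \<in> comps j \<longleftrightarrow> deg m = j"
  proof -
    have "is_comp ?a" using fin by (auto simp: is_comp_def)
    moreover have "sum_list ?a = deg m" using fin by (simp add: sum_list_distinct_conv_sum_set deg_def)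
    ultimately show ?thesis by (auto simp: comps_def)
  qed
  finally show ?thesis by simp
qed

lemma M1_eval: assumes "k > 0" shows "M [k] a = (if (\<exists>i. a = ev i k) then 1 else 0)"
proof (cases "\<exists>i. a = ev i k")
  case True then obtain i where a: "a = ev i k" by blast
  have X: "{j. a j \<noteq> 0} = {i}" using assms a by (auto simp: ev_def)
  have "map a (sorted_list_of_set {j. a j \<noteq> 0}) = [k]" unfolding X by (simp add: a ev_def)
  then have "M [k] a = 1" unfolding M_def X by simp
  then show ?thesis using True by simp
next
  case False
  have "\<not> (finite {j. a j \<noteq> 0} \<and> map a (sorted_list_of_set {j. a j \<noteq> 0}) = [k])"
  proof
    assume H: "finite {j. a j \<noteq> 0} \<and> map a (sorted_list_of_set {j. a j \<noteq> 0}) = [k]"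
    obtain i where si: "sorted_list_of_set {j. a j \<noteq> 0} = [i]"
      using H by (cases "sorted_list_of_set {j. a j \<noteq> 0}") auto
    have ai: "a i = k" using H si by simp
    have X: "{j. a j \<noteq> 0} = set [i]" using H si by (metis set_sorted_list_of_set)
    have "a = ev i k" unfolding ev_def
    proof (rule ext)
      fix x show "a x = (if x = i then k else 0)"
      proof (cases "x = i")
        case True then show ?thesis using ai by simp
      next
        case False
        then have "x \<notin> {j. a j \<noteq> 0}" unfolding X by simp
        then show ?thesis using False by simp
      qed
    qed
    with False show False by blast
  qed
  then show ?thesis using False unfolding M_def by simp
qed

lemma smult_M1:
  assumes k: "k > 0" and fin: "finite {i. m i \<noteq> 0}"
  shows "smult (M [k]) g m = (\<Sum>i\<in>{i. k \<le> m i}. g (\<lambda>j. m j - ev i k j))"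
proof -
  have "smult (M [k]) g m = (\<Sum>a\<in>box m. M [k] a * g (\<lambda>j. m j - a j))" by (rule smult_box)
  also have "\<dots> = (\<Sum>a\<in>(\<lambda>i. ev i k) ` {i. k \<le> m i}. g (\<lambda>j. m j - a j))"
  proof (rule sum.mono_neutral_cong_right)
    show "finite (box m)" using finite_box[OF fin] .
    show "(\<lambda>i. ev i k) ` {i. k \<le> m i} \<subseteq> box m" by (auto simp: box_def ev_def)
    show "\<forall>a\<in>box m - (\<lambda>i. ev i k) ` {i. k \<le> m i}. M [k] a * g (\<lambda>j. m j - a j) = 0"
    proof
      fix a assume a: "a \<in> box m - (\<lambda>i. ev i k) ` {i. k \<le> m i}"
      have "\<not> (\<exists>i. a = ev i k)"
      proof
        assume "\<exists>i. a = ev i k"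
        then obtain i where ai: "a = ev i k" by blast
        then have "k \<le> m i" using a by (auto simp: box_def ev_def dest: spec[of _ i])
        then show False using a ai by auto
      qed
      then show "M [k] a * g (\<lambda>j. m j - a j) = 0" by (simp add: M1_eval[OF k])
    qed
    show "M [k] a * g (\<lambda>j. m j - a j) = g (\<lambda>j. m j - a j)" if "a \<in> (\<lambda>i. ev i k) ` {i. k \<le> m i}" for a
      using that by (auto simp: M1_eval[OF k])
  qed
  also have "\<dots> = (\<Sum>i\<in>{i. k \<le> m i}. g (\<lambda>j. m j - ev i k j))"
  proof (rule sum.reindex[unfolded comp_def])
    show "inj_on (\<lambda>i. ev i k) {i. k \<le> m i}"
    proof (rule inj_onI)
      fix x y assume "ev x k = ev y k"
      then have "ev x k x = ev y k x" by simp
      then show "x = y" using k by (auto simp: ev_def split: if_splits)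
    qed
  qed
  finally show ?thesis .
qed

lemma deg_sub:
  assumes fin: "finite {i. m i \<noteq> 0}" and k: "0 < k" "k \<le> m i"
  shows "deg (\<lambda>j. m j - ev i k j) + k = deg m"
proof -
  let ?S = "{i. m i \<noteq> 0}"
  have iS: "i \<in> ?S" using k by auto
  have "deg (\<lambda>j. m j - ev i k j) = (\<Sum>j\<in>?S. m j - ev i k j)"
    using fin by (intro deg_superset) auto
  also have "\<dots> = (m i - k) + (\<Sum>j\<in>?S - {i}. m j - ev i k j)"
    using fin iS by (subst sum.remove) (auto simp: ev_def)
  also have "(\<Sum>j\<in>?S - {i}. m j - ev i k j) = (\<Sum>j\<in>?S - {i}. m j)"
    by (intro sum.cong) (auto simp: ev_def)
  finally have "deg (\<lambda>j. m j - ev i k j) + k = m i + (\<Sum>j\<in>?S - {i}. m j)" using k by simp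
  also have "\<dots> = deg m" using fin iS by (simp add: deg_def sum.remove)
  finally show ?thesis .
qed

lemma card_sum_swap:
  assumes fin: "finite {i. m i \<noteq> 0}" and dm: "deg m = N"
  shows "(\<Sum>k=1..N. card {i. k \<le> m i}) = N"
proof -
  let ?S = "{i. m i \<noteq> 0}"
  have "(\<Sum>k=1..N. card {i. k \<le> m i}) = (\<Sum>k=1..N. \<Sum>i\<in>?S. if k \<le> m i then 1 else 0)"
  proof (rule sum.cong[OF refl])
    fix k assume "k \<in> {1..N}"
    then have "{i. k \<le> m i} = {i\<in>?S. k \<le> m i}" by auto
    then show "card {i. k \<le> m i} = (\<Sum>i\<in>?S. if k \<le> m i then 1 else 0)"
      using fin by (simp add: sum.inter_filter[symmetric])
  qed
  also have "\<dots> = (\<Sum>i\<in>?S. \<Sum>k=1..N. if k \<le> m i then 1 else 0)" by (rule sum.swap)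
  also have "\<dots> = (\<Sum>i\<in>?S. m i)"
  proof (rule sum.cong[OF refl])
    fix i assume iS: "i \<in> ?S"
    have "m i \<le> deg m" unfolding deg_def using fin iS by (intro member_le_sum) auto
    then have "{k\<in>{1..N}. k \<le> m i} = {1..m i}" using dm by auto
    have "(\<Sum>k=1..N. if k \<le> m i then 1 else 0) = card {k\<in>{1..N}. k \<le> m i}"
      by (simp add: sum.inter_filter[symmetric])
    also have "\<dots> = m i" using \<open>{k\<in>{1..N}. k \<le> m i} = {1..m i}\<close> by simp
    finally show "(\<Sum>k=1..N. if k \<le> m i then 1 else 0) = m i" .
  qed
  also have "\<dots> = N" using dm by (simp add: deg_def)
  finally show ?thesis .
qed

lemma newton_pt:
  assumes N: "N > 0" and fin: "finite {i. m i \<noteq> 0}"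
  shows "of_nat N * h N m = (\<Sum>k=1..N. smult (M [k]) (h (N - k)) m)"
proof -
  have eachk: "smult (M [k]) (h (N-k)) m = (if deg m = N then of_nat (card {i. k \<le> m i}) else 0)"
    if k: "k \<in> {1..N}" for k
  proof -
    have "smult (M [k]) (h (N-k)) m = (\<Sum>i\<in>{i. k \<le> m i}. h (N-k) (\<lambda>j. m j - ev i k j))"
      using k fin by (intro smult_M1) auto
    also have "\<dots> = (\<Sum>i\<in>{i. k \<le> m i}. if deg m = N then 1 else 0)"
    proof (rule sum.cong[OF refl])
      fix i assume "i \<in> {i. k \<le> m i}"
      then have ki: "k \<le> m i" by simp
      have fin2: "finite {j. m j - ev i k j \<noteq> 0}" by (rule finite_subset[OF _ fin]) auto
      have dd: "deg (\<lambda>j. m j - ev i k j) + k = deg m" using deg_sub[OF fin _ ki] k by auto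
      have "(deg (\<lambda>j. m j - ev i k j) = N - k) = (deg m = N)" using dd k by auto
      then show "h (N - k) (\<lambda>j. m j - ev i k j) = (if deg m = N then 1 else 0)"
        by (simp add: h_eval[OF fin2])
    qed
    also have "\<dots> = (if deg m = N then of_nat (card {i. k \<le> m i}) else 0)" by simp
    finally show ?thesis .
  qed
  show ?thesis
  proof (cases "deg m = N")
    case True
    have "(\<Sum>k=1..N. smult (M [k]) (h (N - k)) m) = (\<Sum>k=1..N. of_nat (card {i. k \<le> m i}))"
      using eachk True by (intro sum.cong) auto
    also have "\<dots> = of_nat (\<Sum>k=1..N. card {i. k \<le> m i})" by simp
    also have "\<dots> = of_nat N" using card_sum_swap[OF fin True] by simp
    finally show ?thesis using True by (simp add: h_eval[OF fin])
  next
    case False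
    then show ?thesis using eachk by (simp add: h_eval[OF fin])
  qed
qed





lemma good_M: "good (M \<alpha>)" by (auto simp: good_def M_def)
lemma good_h: "good (h n)" by (auto simp: good_def h_def M_def)
lemma good_p: "good (p n)" by (auto simp: good_def p_def sscale_def M_def)

definition Hh :: "nat \<Rightarrow> ser" where "Hh n = Abs_ser (h n)"
definition Hp :: "nat \<Rightarrow> ser" where "Hp n = Abs_ser (p n)"

lemma Rep_Hh: "Rep_ser (Hh n) = h n" by (simp add: Hh_def Abs_ser_inverse good_h)
lemma Rep_Hp: "Rep_ser (Hp n) = p n" by (simp add: Hp_def Abs_ser_inverse good_p)

lemma Rep_sum: "Rep_ser (sum f A) = (\<lambda>m. \<Sum>x\<in>A. Rep_ser (f x) m)"
  by (induct A rule: infinite_finite_induct) (simp_all add: zero_ser.rep_eq plus_ser.rep_eq)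

lemma Rep_of_nat_mult: "Rep_ser (of_nat n * x) = (\<lambda>m. of_nat n * Rep_ser x m)"
  using Rep_rs_mult[of "of_nat n" x] by (simp add: rs_of_nat)

lemma Rep_mult: "Rep_ser (x * y) = smult (Rep_ser x) (Rep_ser y)" by (rule times_ser.rep_eq)

lemma Rep_kHp: "k > 0 \<Longrightarrow> Rep_ser (of_nat k * Hp k) = M [k]"
  by (auto simp: Rep_of_nat_mult Rep_Hp p_def sscale_def fun_eq_iff)

lemma Rep_inf: "infinite {i. m i \<noteq> 0} \<Longrightarrow> Rep_ser x m = 0"
  using Rep_good[of x] by (simp add: good_def)

definition Hs :: "ser fps" where "Hs = Abs_fps Hh"
definition Pall :: "ser fps" where "Pall = Abs_fps (\<lambda>n. if n = 0 then 0 else Hp n)"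

lemma newton_ser: "of_nat (Suc n) * Hh (Suc n) = (\<Sum>i=0..n. (of_nat (Suc i) * Hp (Suc i)) * Hh (n - i))"
proof -
  have "Rep_ser (of_nat (Suc n) * Hh (Suc n)) m = Rep_ser (\<Sum>i=0..n. (of_nat (Suc i) * Hp (Suc i)) * Hh (n - i)) m" for m
  proof (cases "finite {i. m i \<noteq> 0}")
    case True
    have "Rep_ser (\<Sum>i=0..n. (of_nat (Suc i) * Hp (Suc i)) * Hh (n - i)) m = (\<Sum>i=0..n. smult (M [Suc i]) (h (n - i)) m)"
    proof -
      have eq: "Rep_ser ((of_nat (Suc i) * Hp (Suc i)) * Hh (n - i)) = smult (M [Suc i]) (h (n - i))" for i
        by (subst Rep_mult) (simp only: Rep_kHp[OF zero_less_Suc] Rep_Hh)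
      show ?thesis unfolding Rep_sum eq ..
    qed
    also have "\<dots> = (\<Sum>k=Suc 0..Suc n. smult (M [k]) (h (Suc n - k)) m)"
      using sum.atLeast_Suc_atMost_Suc_shift[of "\<lambda>k. smult (M [k]) (h (Suc n - k)) m" 0 n] by simp
    also have "\<dots> = of_nat (Suc n) * h (Suc n) m" using newton_pt[of "Suc n" m] True by simp
    also have "\<dots> = Rep_ser (of_nat (Suc n) * Hh (Suc n)) m" by (simp only: Rep_of_nat_mult Rep_Hh)
    finally show ?thesis by simp
  next
    case False then show ?thesis by (simp add: Rep_inf)
  qed
  then show ?thesis by (simp add: Rep_ser_inject[symmetric] fun_eq_iff)
qed

lemma h0: "h 0 = sone"
proof
  fix m
  show "h 0 m = sone m"
  proof (cases "finite {i. m i \<noteq> 0}")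
    case True
    have "deg m = 0 \<longleftrightarrow> m = (\<lambda>_. 0)"
    proof
      assume "deg m = 0"
      then have "\<forall>i\<in>{i. m i \<noteq> 0}. m i = 0" using True by (simp add: deg_def)
      then show "m = (\<lambda>_. 0)" by auto
    next
      assume "m = (\<lambda>_. 0)" then show "deg m = 0" by (simp add: deg_def)
    qed
    then show ?thesis using True by (simp add: h_eval sone_def)
  next
    case False
    then have "m \<noteq> (\<lambda>_. 0)" by auto
    then show ?thesis using False good_h[of 0] by (simp add: good_def sone_def)
  qed
qed

lemma Hh0: "Hh 0 = 1"
  by (simp add: Rep_ser_inject[symmetric] Rep_Hh one_ser.rep_eq h0)

lemma Hs_newton: "fps_deriv Hs = fps_deriv Pall * Hs"
proof (rule fps_ext)
  fix n
  show "fps_deriv Hs $ n = (fps_deriv Pall * Hs) $ n"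
    unfolding fps_deriv_nth fps_mult_nth Hs_def Pall_def fps_nth_Abs_fps
    using newton_ser[of n] by (simp add: mult.assoc)
qed

lemma Hs_Ex: "Hs = Exs Pall"
proof (rule ode_unique)
  show "Hs $ 0 = Exs Pall $ 0" by (simp add: Hs_def Hh0 Ex_0)
  show "fps_deriv Hs = fps_deriv Pall * Hs" by (rule Hs_newton)
  show "fps_deriv (Exs Pall) = fps_deriv Pall * Exs Pall" by (rule Ex_deriv) (simp add: Pall_def)
qed

definition Pe :: "ser fps" where "Pe = Abs_fps (\<lambda>n. if n \<noteq> 0 \<and> even n then Hp n else 0)"
definition Po :: "ser fps" where "Po = Abs_fps (\<lambda>n. if odd n then Hp n else 0)"

lemma Pall_split: "Pall = Pe + Po"
  by (rule fps_ext) (auto simp: Pall_def Pe_def Po_def)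

lemma Hs_split: "Hs = Exs Pe * Exs Po"
  by (simp add: Hs_Ex Pall_split Ex_add Pe_def Po_def)

fun noOE :: "nat list \<Rightarrow> bool" where
  "noOE [] = True"
| "noOE [x] = True"
| "noOE (x#y#zs) = (\<not>(odd x \<and> even y) \<and> noOE (y#zs))"

lemma noOE_odd: "\<forall>z\<in>set y. odd z \<Longrightarrow> noOE y"
  by (induct y rule: noOE.induct) auto

lemma noOE_app: "\<forall>z\<in>set x. even z \<Longrightarrow> \<forall>z\<in>set y. odd z \<Longrightarrow> noOE (x@y)"
proof (induct x)
  case Nil then show ?case by (simp add: noOE_odd)
next
  case (Cons a x)
  then show ?case by (cases "x@y") auto
qed

lemma noOE_drop: "noOE \<beta> \<Longrightarrow> \<forall>z\<in>set (dropWhile even \<beta>). odd z"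
proof (induct \<beta> rule: noOE.induct)
  case 1 then show ?case by simp
next
  case (2 x) then show ?case by simp
next
  case (3 x y zs)
  have n: "\<not>(odd x \<and> even y)" "noOE (y#zs)" using "3.prems" by simp_all
  have ih: "\<forall>z\<in>set (dropWhile even (y#zs)). odd z" using "3.hyps" n(2) by blast
  show ?case
  proof (cases "even x")
    case True
    have d: "dropWhile even (x#y#zs) = dropWhile even (y#zs)" by (simp only: dropWhile.simps True if_True)
    show ?thesis unfolding d by (rule ih)
  next
    case False
    then have ney: "\<not> even y" using n(1) by simp
    have d1: "dropWhile even (x#y#zs) = x#y#zs" by (simp only: dropWhile.simps False if_False)
    have d2: "dropWhile even (y#zs) = y#zs" by (simp only: dropWhile.simps ney if_False)
    have "\<forall>z\<in>set (y#zs). odd z" using ih unfolding d2 .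
    then show ?thesis unfolding d1 using False by simp
  qed
qed

lemma tw_odd: assumes "\<forall>z\<in>set y. odd z" shows "takeWhile even y = []" "dropWhile even y = y"
proof -
  have "takeWhile even y = [] \<and> dropWhile even y = y"
  proof (cases y)
    case Nil then show ?thesis by simp
  next
    case (Cons a y')
    then have na: "\<not> even a" using assms by simp
    have "takeWhile even (a#y') = []" by (simp only: takeWhile.simps na if_False)
    moreover have "dropWhile even (a#y') = a#y'" by (simp only: dropWhile.simps na if_False)
    ultimately show ?thesis using Cons by simp
  qed
  then show "takeWhile even y = []" "dropWhile even y = y" by simp_all
qed

lemma prod_list_map_0: "\<exists>k\<in>set xs. f k = (0::'a::comm_ring_1) \<Longrightarrow> prod_list (map f xs) = 0"
proof (induct xs)
  case Nil then show ?case by simp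
next
  case (Cons a xs)
  show ?case
  proof (cases "f a = 0")
    case True then show ?thesis by simp
  next
    case False
    then have "\<exists>k\<in>set xs. f k = 0" using Cons.prems by auto
    then show ?thesis using Cons.hyps by simp
  qed
qed

lemma rs_inv_mult: "rs (1 / (a * b)) = rs (1 / a) * rs (1 / b)"
  by (simp add: rs_mult[symmetric])

lemma heart: "Hh g = (\<Sum>\<beta>\<in>{\<beta>\<in>comps g. noOE \<beta>}. rs (cblock \<beta>) * prod_list (map Hp \<beta>))"
proof -
  define F where "F x y = rs (1 / fact (length x)) * prod_list (map (\<lambda>k. Pe $ k) x) *
       (rs (1 / fact (length y)) * prod_list (map (\<lambda>k. Po $ k) y))" for x y
  define PP where "PP = {(x,y). is_comp x \<and> is_comp y \<and> sum_list x + sum_list y = g}"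
  define PP' where "PP' = {(x,y). (x,y) \<in> PP \<and> (\<forall>z\<in>set x. even z) \<and> (\<forall>z\<in>set y. odd z)}"
  have Pe0: "Pe $ 0 = 0" and Po0: "Po $ 0 = 0" by (simp_all add: Pe_def Po_def)
  have "Hh g = (Exs Pe * Exs Po) $ g" by (simp add: Hs_split[symmetric] Hs_def)
  also have "\<dots> = (\<Sum>j=0..g. \<Sum>x\<in>comps j. \<Sum>y\<in>comps (g-j). F x y)"
    by (simp add: fps_mult_nth Ex_comps Pe0 Po0 F_def sum_product)
  also have "\<dots> = (\<Sum>j=0..g. \<Sum>(x,y)\<in>comps j \<times> comps (g-j). F x y)"
    by (simp add: sum.cartesian_product)
  also have "\<dots> = (\<Sum>(x,y)\<in>PP. F x y)"
  proof -
    have finPP: "finite PP"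
    proof (rule finite_subset)
      show "PP \<subseteq> (\<Union>j\<le>g. comps j) \<times> (\<Union>j\<le>g. comps j)"
        by (auto simp: PP_def comps_def)
      show "finite ((\<Union>j\<le>g. comps j) \<times> (\<Union>j\<le>g. comps j))" by (simp add: finite_comps)
    qed
    have "(\<Sum>(x,y)\<in>PP. F x y) = (\<Sum>j\<in>{0..g}. \<Sum>q\<in>{q. q \<in> PP \<and> sum_list (fst q) = j}. (case q of (x,y) \<Rightarrow> F x y))"
      using finPP by (intro sum.group[symmetric]) (auto simp: PP_def)
    also have "\<dots> = (\<Sum>j=0..g. \<Sum>(x,y)\<in>comps j \<times> comps (g-j). F x y)"
    proof (rule sum.cong[OF refl])
      fix j assume "j \<in> {0..g}"
      then have "{q. q \<in> PP \<and> sum_list (fst q) = j} = comps j \<times> comps (g-j)"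
        by (auto simp: PP_def comps_def)
      then show "(\<Sum>q\<in>{q. q \<in> PP \<and> sum_list (fst q) = j}. (case q of (x,y) \<Rightarrow> F x y)) =
                 (\<Sum>(x,y)\<in>comps j \<times> comps (g-j). F x y)" by simp
    qed
    finally show ?thesis by simp
  qed
  also have "\<dots> = (\<Sum>(x,y)\<in>PP'. F x y)"
  proof (rule sum.mono_neutral_right)
    show "finite PP"
    proof (rule finite_subset)
      show "PP \<subseteq> (\<Union>j\<le>g. comps j) \<times> (\<Union>j\<le>g. comps j)"
        by (auto simp: PP_def comps_def)
      show "finite ((\<Union>j\<le>g. comps j) \<times> (\<Union>j\<le>g. comps j))" by (simp add: finite_comps)
    qed
    show "PP' \<subseteq> PP" by (auto simp: PP'_def)
    show "\<forall>q\<in>PP - PP'. (case q of (x,y) \<Rightarrow> F x y) = 0"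
    proof
      fix q assume q: "q \<in> PP - PP'"
      obtain x y where qxy: "q = (x,y)" by fastforce
      have "(\<exists>z\<in>set x. odd z) \<or> (\<exists>z\<in>set y. even z)" using q qxy by (auto simp: PP'_def)
      then show "(case q of (x,y) \<Rightarrow> F x y) = 0"
      proof
        assume "\<exists>z\<in>set x. odd z"
        then have "prod_list (map (\<lambda>k. Pe $ k) x) = 0" by (intro prod_list_map_0) (auto simp: Pe_def)
        then show ?thesis by (simp add: qxy F_def)
      next
        assume "\<exists>z\<in>set y. even z"
        then have "prod_list (map (\<lambda>k. Po $ k) y) = 0" by (intro prod_list_map_0) (auto simp: Po_def)
        then show ?thesis by (simp add: qxy F_def)
      qed
    qed
  qed
  also have "\<dots> = (\<Sum>\<beta>\<in>{\<beta>\<in>comps g. noOE \<beta>}. rs (cblock \<beta>) * prod_list (map Hp \<beta>))"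
  proof (rule sum.reindex_bij_witness[where i="\<lambda>\<beta>. (takeWhile even \<beta>, dropWhile even \<beta>)" and j="\<lambda>(x,y). x @ y"])
    fix q assume q: "q \<in> PP'"
    obtain x y where qxy: "q = (x,y)" by fastforce
    have xe: "\<forall>z\<in>set x. even z" and yo: "\<forall>z\<in>set y. odd z" and cx: "is_comp x" and cy: "is_comp y"
      and sxy: "sum_list x + sum_list y = g"
      using q unfolding qxy PP'_def PP_def by auto
    have tw: "takeWhile even (x @ y) = x"
    proof -
      have "takeWhile even (x @ y) = x @ takeWhile even y" by (rule takeWhile_append2) (use xe in blast)
      then show ?thesis using tw_odd[OF yo] by simp
    qed
    have dw: "dropWhile even (x @ y) = y"
    proof -
      have "dropWhile even (x @ y) = dropWhile even y" by (rule dropWhile_append2) (use xe in blast)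
      then show ?thesis using tw_odd[OF yo] by simp
    qed
    show "(case case q of (x, y) \<Rightarrow> x @ y of \<beta> \<Rightarrow> (takeWhile even \<beta>, dropWhile even \<beta>)) = q"
      unfolding qxy by (simp only: case_prod_conv tw dw)
    have "is_comp (x @ y)" using cx cy by (auto simp: is_comp_def)
    moreover have "sum_list (x @ y) = g" using sxy by simp
    ultimately show "(case q of (x, y) \<Rightarrow> x @ y) \<in> {\<beta> \<in> comps g. noOE \<beta>}"
      using noOE_app[OF xe yo] unfolding qxy comps_def by simp
    have me: "map (\<lambda>k. Pe $ k) x = map Hp x"
    proof (rule map_cong[OF refl])
      fix k assume "k \<in> set x"
      then have "k \<noteq> 0" "even k" using xe cx by (auto simp: is_comp_def)
      then show "Pe $ k = Hp k" by (simp add: Pe_def)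
    qed
    have mo: "map (\<lambda>k. Po $ k) y = map Hp y"
    proof (rule map_cong[OF refl])
      fix k assume "k \<in> set y"
      then have "odd k" using yo by auto
      then show "Po $ k = Hp k" by (simp add: Po_def)
    qed
    have fo: "filter odd (x @ y) = y"
    proof -
      have "filter odd x = []" using xe by (simp add: filter_empty_conv)
      moreover have "filter odd y = y" using yo by (simp add: filter_id_conv)
      ultimately show ?thesis by simp
    qed
    have fe: "filter even (x @ y) = x"
    proof -
      have "filter even x = x" using xe by (simp add: filter_id_conv)
      moreover have "filter even y = []" using yo by (simp add: filter_empty_conv)
      ultimately show ?thesis by simp
    qed
    have cb: "rs (cblock (x @ y)) = rs (1 / fact (length x)) * rs (1 / fact (length y))"
      unfolding cblock_def fo fe by (simp add: rs_inv_mult of_nat_fact mult.commute)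
    have "rs (cblock (x @ y)) * prod_list (map Hp (x @ y)) = F x y"
      unfolding cb F_def me mo by (simp add: mult_ac)
    then show "rs (cblock (case q of (x, y) \<Rightarrow> x @ y)) * prod_list (map Hp (case q of (x, y) \<Rightarrow> x @ y)) =
          (case q of (x, y) \<Rightarrow> F x y)" unfolding qxy by simp
  next
    fix b assume b: "b \<in> {\<beta> \<in> comps g. noOE \<beta>}"
    show "(case (takeWhile even b, dropWhile even b) of (x, y) \<Rightarrow> x @ y) = b"
      by (simp only: case_prod_conv takeWhile_dropWhile_id)
    have ob: "\<forall>z\<in>set (dropWhile even b). odd z" using b noOE_drop by blast
    have eb: "\<forall>z\<in>set (takeWhile even b). even z" by (blast dest: set_takeWhileD)
    have "sum_list (takeWhile even b) + sum_list (dropWhile even b) = sum_list b"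
      by (simp only: sum_list_append[symmetric] takeWhile_dropWhile_id)
    then have sb: "sum_list (takeWhile even b) + sum_list (dropWhile even b) = g"
      using b by (simp add: comps_def)
    have cb1: "is_comp (takeWhile even b)" using b unfolding comps_def is_comp_def by (blast dest: set_takeWhileD)
    have cb2: "is_comp (dropWhile even b)" using b unfolding comps_def is_comp_def by (blast dest: set_dropWhileD)
    show "(takeWhile even b, dropWhile even b) \<in> PP'" unfolding PP'_def PP_def using ob eb sb cb1 cb2 by blast
  qed
  finally show ?thesis .
qed





lemma psums_Nil[simp]: "psums [] = {}" by (simp add: psums_def)

lemma psums_Cons: "psums (a # xs) = (if xs = [] then {} else insert a ((+) a ` psums xs))"
proof (cases "xs = []")
  case True then show ?thesis by (simp add: psums_def)
next
  case False
  have "psums (a # xs) = insert a ((+) a ` psums xs)"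
  proof (rule set_eqI, rule iffI)
    fix x assume "x \<in> psums (a # xs)"
    then obtain k where k: "x = sum_list (take k (a#xs))" "0 < k" "k < Suc (length xs)"
      by (auto simp: psums_def)
    then obtain j where j: "k = Suc j" by (cases k) auto
    show "x \<in> insert a ((+) a ` psums xs)"
    proof (cases "j = 0")
      case True then show ?thesis using k j by simp
    next
      case False
      then have "sum_list (take j xs) \<in> psums xs" using k j by (auto simp: psums_def)
      then show ?thesis using k j by simp
    qed
  next
    fix x assume "x \<in> insert a ((+) a ` psums xs)"
    then consider "x = a" | y where "y \<in> psums xs" "x = a + y" by blast
    then show "x \<in> psums (a # xs)"
    proof cases
      case 1
      then have "x = sum_list (take 1 (a#xs)) \<and> 0 < (1::nat) \<and> 1 < length (a#xs)" using False by simp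
      then show ?thesis unfolding psums_def by blast
    next
      case 2
      then obtain j where j: "y = sum_list (take j xs)" "0<j" "j < length xs" by (auto simp: psums_def)
      then have "x = sum_list (take (Suc j) (a#xs)) \<and> 0 < Suc j \<and> Suc j < length (a#xs)" using 2 by simp
      then show ?thesis unfolding psums_def by blast
    qed
  qed
  then show ?thesis using False by simp
qed

lemma finite_psums: "finite (psums xs)"
  unfolding psums_def by simp

lemma sum_pos: "is_comp xs \<Longrightarrow> xs \<noteq> [] \<Longrightarrow> 0 < sum_list xs"
  by (cases xs) (auto simp: is_comp_def)

lemma is_comp_Cons: "is_comp (a # xs) \<longleftrightarrow> 0 < a \<and> is_comp xs"
  by (simp add: is_comp_def)

lemma psums_bound: "is_comp xs \<Longrightarrow> x \<in> psums xs \<Longrightarrow> 0 < x \<and> x < sum_list xs"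
proof (induct xs arbitrary: x)
  case Nil then show ?case by simp
next
  case (Cons a xs)
  have a: "0 < a" "is_comp xs" using Cons.prems(1) by (simp_all add: is_comp_Cons)
  have ne: "xs \<noteq> []" using Cons.prems(2) by (auto simp: psums_Cons split: if_splits)
  have sp: "0 < sum_list xs" using sum_pos[OF a(2) ne] .
  from Cons.prems(2) ne consider "x = a" | y where "y \<in> psums xs" "x = a + y"
    by (auto simp: psums_Cons)
  then show ?case
  proof cases
    case 1 then show ?thesis using a sp by simp
  next
    case 2 then show ?thesis using Cons.hyps[OF a(2) 2(1)] by simp
  qed
qed

lemma psums_append:
  "xs \<noteq> [] \<Longrightarrow> ys \<noteq> [] \<Longrightarrow>
   psums (xs @ ys) = psums xs \<union> insert (sum_list xs) ((+) (sum_list xs) ` psums ys)"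
proof (induct xs)
  case Nil then show ?case by simp
next
  case (Cons a xs)
  show ?case
  proof (cases "xs = []")
    case True then show ?thesis using Cons.prems by (simp add: psums_Cons)
  next
    case False
    have "psums ((a # xs) @ ys) = insert a ((+) a ` psums (xs @ ys))"
      using Cons.prems by (simp add: psums_Cons)
    also have "\<dots> = insert a ((+) a ` (psums xs \<union> insert (sum_list xs) ((+) (sum_list xs) ` psums ys)))"
      using Cons.hyps[OF False Cons.prems(2)] by simp
    also have "\<dots> = psums (a # xs) \<union> insert (sum_list (a # xs)) ((+) (sum_list (a # xs)) ` psums ys)"
      using False by (simp add: psums_Cons image_Un image_image add.assoc insert_commute)
    finally show ?thesis .
  qed
qed

definition osums :: "nat list \<Rightarrow> nat set" where
  "osums \<beta> = (\<lambda>i. sum_list (take i \<beta>)) ` OtE \<beta>"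

lemma OtE_Cons: "OtE (a # xs) = (if xs \<noteq> [] \<and> odd a \<and> even (hd xs) then {1} else {}) \<union> Suc ` OtE xs"
proof (rule set_eqI)
  fix i
  show "i \<in> OtE (a # xs) \<longleftrightarrow> i \<in> (if xs \<noteq> [] \<and> odd a \<and> even (hd xs) then {1} else {}) \<union> Suc ` OtE xs"
  proof (cases i)
    case 0 then show ?thesis by (auto simp: OtE_def)
  next
    case (Suc j)
    show ?thesis
    proof (cases j)
      case 0 then show ?thesis using Suc by (cases xs) (auto simp: OtE_def)
    next
      case (Suc j')
      have "i \<in> Suc ` OtE xs \<longleftrightarrow> Suc j' \<in> OtE xs" using \<open>i = Suc j\<close> Suc by auto
      then show ?thesis using \<open>i = Suc j\<close> Suc by (auto simp: OtE_def)
    qed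
  qed
qed

lemma osums_Cons: "osums (a # xs) = (if xs \<noteq> [] \<and> odd a \<and> even (hd xs) then {a} else {}) \<union> (+) a ` osums xs"
  unfolding osums_def OtE_Cons by (auto simp: image_Un image_image)

lemma osums_Nil[simp]: "osums [] = {}" by (simp add: osums_def OtE_def)

lemma osums_single[simp]: "osums [a] = {}" by (simp add: osums_Cons)

lemma osums_sub: "osums xs \<subseteq> psums xs"
  unfolding osums_def OtE_def psums_def by force

lemma osums_empty_iff: "osums xs = {} \<longleftrightarrow> noOE xs"
proof (induct xs rule: noOE.induct)
  case 1 then show ?case by (simp add: osums_def OtE_def)
next
  case (2 x) then show ?case by (simp add: osums_def OtE_def)
next
  case (3 x y zs) then show ?case by (simp add: osums_Cons)
qed

lemma osums_append:
  "xs \<noteq> [] \<Longrightarrow> ys \<noteq> [] \<Longrightarrow>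
   osums (xs @ ys) = osums xs \<union> (if odd (last xs) \<and> even (hd ys) then {sum_list xs} else {})
      \<union> (+) (sum_list xs) ` osums ys"
proof (induct xs)
  case Nil then show ?case by simp
next
  case (Cons a xs)
  show ?case
  proof (cases "xs = []")
    case True then show ?thesis using Cons.prems by (simp add: osums_Cons)
  next
    case False
    have "osums ((a # xs) @ ys) = (if odd a \<and> even (hd xs) then {a} else {}) \<union> (+) a ` osums (xs @ ys)"
      using Cons.prems False by (simp add: osums_Cons)
    also have "\<dots> = (if odd a \<and> even (hd xs) then {a} else {}) \<union> (+) a ` (osums xs \<union> (if odd (last xs) \<and> even (hd ys) then {sum_list xs} else {})
      \<union> (+) (sum_list xs) ` osums ys)"
      using Cons.hyps[OF False Cons.prems(2)] by simp
    also have "\<dots> = osums (a # xs) \<union> (if odd (last (a # xs)) \<and> even (hd ys) then {sum_list (a # xs)} else {})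
      \<union> (+) (sum_list (a # xs)) ` osums ys"
      using False by (auto simp: osums_Cons image_Un image_image add.assoc)
    finally show ?thesis .
  qed
qed

lemma tel:
  fixes S :: "nat list"
  assumes "sorted S" "k \<le> length S"
  shows "sum_list (take k (map (\<lambda>j. S ! j - (if j = 0 then 0 else S ! (j - 1))) [0..<length S])) =
         (if k = 0 then 0 else S ! (k - 1))"
  using assms(2)
proof (induct k)
  case 0 then show ?case by simp
next
  case (Suc k)
  let ?f = "\<lambda>j. S ! j - (if j = 0 then 0 else S ! (j - 1))"
  have "take (Suc k) (map ?f [0..<length S]) = map ?f [0..<Suc k]" using Suc.prems by (simp add: take_map)
  also have "\<dots> = map ?f [0..<k] @ [?f k]" by simp
  finally have e: "sum_list (take (Suc k) (map ?f [0..<length S])) = sum_list (map ?f [0..<k]) + ?f k" by simp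
  have "take k (map ?f [0..<length S]) = map ?f [0..<k]" using Suc.prems by (simp add: take_map)
  then have e2: "sum_list (map ?f [0..<k]) = (if k = 0 then 0 else S ! (k - 1))"
    using Suc.hyps Suc.prems by simp
  show ?case
  proof (cases k)
    case 0 then show ?thesis using e e2 by simp
  next
    case (Suc k')
    have "S ! k' \<le> S ! k" using assms(1) Suc \<open>Suc k \<le> length S\<close> by (intro sorted_nth_mono) auto
    then show ?thesis using e e2 Suc by simp
  qed
qed

lemma psums_mo: assumes "is_comp \<beta>" shows "psums (mo \<beta>) = osums \<beta>"
proof -
  let ?X = "osums \<beta>"
  let ?n = "sum_list \<beta>"
  let ?L = "sorted_list_of_set ?X"
  let ?S = "?L @ [?n]"
  let ?f = "\<lambda>j. ?S ! j - (if j = 0 then 0 else ?S ! (j - 1))"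
  have mo: "mo \<beta> = map ?f [0..<length ?S]" by (simp add: mo_def osums_def Let_def)
  have finX: "finite ?X" by (rule finite_subset[OF osums_sub finite_psums])
  have lt: "\<forall>x\<in>set ?L. x < ?n" using finX osums_sub psums_bound[OF assms] by auto
  have sS: "sorted ?S" using lt by (auto simp: sorted_append less_imp_le)
  have tk: "sum_list (take k (mo \<beta>)) = ?S ! (k - 1)" if "0 < k" "k < length ?S" for k
    using tel[OF sS, of k] that mo by simp
  have "psums (mo \<beta>) = {sum_list (take k (mo \<beta>)) | k. 0 < k \<and> k < length ?S}" by (simp add: psums_def mo)
  also have "\<dots> = {?S ! (k - 1) | k. 0 < k \<and> k < length ?S}"
    using tk by (auto; metis)
  also have "\<dots> = set ?L"
  proof (rule set_eqI, rule iffI)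
    fix x assume "x \<in> {?S ! (k - 1) | k. 0 < k \<and> k < length ?S}"
    then obtain k where k: "x = ?S ! (k - 1)" "0 < k" "k < length ?S" by blast
    then have "k - 1 < length ?L" by simp
    then show "x \<in> set ?L" using k by (simp add: nth_append)
  next
    fix x assume "x \<in> set ?L"
    then obtain i where i: "i < length ?L" "x = ?L ! i" by (auto simp: in_set_conv_nth)
    then have "x = ?S ! (Suc i - 1) \<and> 0 < Suc i \<and> Suc i < length ?S" by (simp add: nth_append)
    then show "x \<in> {?S ! (k - 1) | k. 0 < k \<and> k < length ?S}" by blast
  qed
  also have "\<dots> = ?X" using finX by simp
  finally show ?thesis .
qed

lemma sum_take_less:
  assumes "is_comp \<beta>" "i < j" "j \<le> length \<beta>"
  shows "sum_list (take i \<beta>) < sum_list (take j \<beta>)"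
proof -
  have "take j \<beta> = take i \<beta> @ take (j - i) (drop i \<beta>)" using take_add[of i "j - i" \<beta>] assms(2) by simp
  moreover have "0 < sum_list (take (j - i) (drop i \<beta>))"
  proof (rule sum_pos)
    show "is_comp (take (j - i) (drop i \<beta>))" using assms(1) by (auto simp: is_comp_def dest: in_set_takeD in_set_dropD)
    show "take (j - i) (drop i \<beta>) \<noteq> []" using assms by simp
  qed
  ultimately show ?thesis by simp
qed

lemma least_k:
  assumes "is_comp \<beta>" "k \<le> length \<beta>"
  shows "(LEAST k'. sum_list (take k' \<beta>) = sum_list (take k \<beta>)) = k"
proof (rule Least_equality)
  show "sum_list (take k \<beta>) = sum_list (take k \<beta>)" ..
  fix y assume y: "sum_list (take y \<beta>) = sum_list (take k \<beta>)"
  show "k \<le> y"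
  proof (rule ccontr)
    assume "\<not> k \<le> y" then have "y < k" by simp
    then have "sum_list (take y \<beta>) < sum_list (take k \<beta>)" using sum_take_less assms by blast
    with y show False by simp
  qed
qed

lemma c_Cons:
  assumes "is_comp \<beta>" "k \<le> length \<beta>"
  shows "c \<beta> (sum_list (take k \<beta>) # gs) = cblock (take k \<beta>) * c (drop k \<beta>) gs"
  using least_k[OF assms] by (simp add: c_def Let_def)

lemma Scoef_nz: "Scoef \<beta> \<gamma> \<noteq> 0 \<Longrightarrow> \<gamma> \<in> comps (sum_list \<beta>) \<and> psums \<gamma> \<subseteq> psums \<beta>"
  by (auto simp: Scoef_def comp_le_def split: if_splits)

lemma Scoef_Nil: "Scoef [] [] = 1"
proof -
  have "psums (mo []) = {}" by (simp add: psums_mo is_comp_def)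
  then show ?thesis by (simp add: Scoef_def comp_le_def comps_def is_comp_def c_def)
qed

lemma blocks_diag: "is_comp \<gamma> \<Longrightarrow> blocks \<gamma> \<gamma> = map (\<lambda>x. [x]) \<gamma>"
proof (induct \<gamma>)
  case Nil then show ?case by simp
next
  case (Cons x xs)
  have "(LEAST k. sum_list (take k (x#xs)) = sum_list (take 1 (x#xs))) = 1"
    using least_k[of "x#xs" 1] Cons.prems by simp
  then have "(LEAST k. sum_list (take k (x#xs)) = x) = 1" by simp
  then show ?case using Cons by (simp add: Let_def is_comp_Cons)
qed

lemma Scoef_diag: assumes "is_comp \<gamma>" shows "Scoef \<gamma> \<gamma> = 1"
proof -
  have "c \<gamma> \<gamma> = 1" unfolding c_def blocks_diag[OF assms]
    by (induct \<gamma>) (simp_all add: cblock_def)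
  moreover have "comp_le (mo \<gamma>) \<gamma>" using psums_mo[OF assms] osums_sub by (simp add: comp_le_def)
  ultimately show ?thesis using assms by (simp add: Scoef_def comps_def comp_le_def)
qed

lemma comp_sum0: assumes "is_comp xs" "sum_list xs = 0" shows "xs = []"
proof (rule ccontr)
  assume "xs \<noteq> []"
  then have "0 < sum_list xs" using sum_pos[OF assms(1)] by blast
  then show False using assms(2) by linarith
qed

lemma SC_split:
  assumes g: "g > 0" and gs: "is_comp gs" and b: "is_comp \<beta>" "sum_list \<beta> = g + sum_list gs"
    and k: "k \<le> length \<beta>" "sum_list (take k \<beta>) = g"
  shows "Scoef \<beta> (g # gs) = (if noOE (take k \<beta>) then cblock (take k \<beta>) * Scoef (drop k \<beta>) gs else 0)"
proof -
  define b1 where "b1 = take k \<beta>"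
  define b2 where "b2 = drop k \<beta>"
  have bb: "\<beta> = b1 @ b2" by (simp add: b1_def b2_def)
  have cc: "c \<beta> (g # gs) = cblock b1 * c b2 gs"
    using c_Cons[OF b(1) k(1), of gs] k(2) by (simp add: b1_def b2_def)
  have cb1: "is_comp b1" "is_comp b2" using b(1) unfolding bb by (auto simp: is_comp_def)
  have s1: "sum_list b1 = g" using k(2) by (simp add: b1_def)
  have s2: "sum_list b2 = sum_list gs" using b(2) s1 unfolding bb by simp
  have gcomp: "g # gs \<in> comps (sum_list \<beta>)" using g gs b(2) by (simp add: comps_def is_comp_Cons)
  have gs_comp: "gs \<in> comps (sum_list b2)" using gs s2 by (simp add: comps_def)
  have b1ne: "b1 \<noteq> []" using s1 g by auto
  show ?thesis
  proof (cases "gs = []")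
    case True
    then have "b2 = []" using s2 cb1(2) comp_sum0 by simp
    then have b1b: "b1 = \<beta>" using bb by simp
    have "Scoef \<beta> [g] = (if osums \<beta> = {} then c \<beta> [g] else 0)"
      using gcomp True psums_mo[OF b(1)] by (auto simp: Scoef_def comp_le_def psums_Cons)
    also have "c \<beta> [g] = cblock \<beta>" using cc True \<open>b2 = []\<close> b1b by (simp add: c_def)
    finally show ?thesis using True b1b \<open>b2 = []\<close> by (simp add: b1_def[symmetric] b2_def[symmetric] osums_empty_iff Scoef_Nil)
  next
    case False
    have b2ne: "b2 \<noteq> []"
    proof
      assume "b2 = []" then have "sum_list gs = 0" using s2 by simp
      then show False using sum_pos[OF gs False] by linarith
    qed
    have pg: "psums (g # gs) = insert g ((+) g ` psums gs)" using False by (simp add: psums_Cons)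
    have pb: "psums \<beta> = psums b1 \<union> insert g ((+) g ` psums b2)"
      unfolding bb using psums_append[OF b1ne b2ne] s1 by simp
    have ob: "osums \<beta> = osums b1 \<union> (if odd (last b1) \<and> even (hd b2) then {g} else {}) \<union> (+) g ` osums b2"
      unfolding bb using osums_append[OF b1ne b2ne] s1 by simp
    have lt1: "\<forall>x\<in>psums b1. x < g" using psums_bound[OF cb1(1)] s1 by blast
    have pos_gs: "\<forall>x\<in>psums gs. 0 < x" using psums_bound[OF gs] by blast
    have pos_b2: "\<forall>x\<in>osums b2. 0 < x" using psums_bound[OF cb1(2)] osums_sub by blast
    have lto1: "\<forall>x\<in>osums b1. x < g" using lt1 osums_sub by blast
    have A: "psums (g # gs) \<subseteq> psums \<beta> \<longleftrightarrow> psums gs \<subseteq> psums b2"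
    proof
      assume H: "psums (g # gs) \<subseteq> psums \<beta>"
      show "psums gs \<subseteq> psums b2"
      proof
        fix x assume x: "x \<in> psums gs"
        then have "g + x \<in> psums \<beta>" using H pg by auto
        moreover have "0 < x" using x pos_gs by blast
        ultimately have "g + x \<in> (+) g ` psums b2" using pb lt1 by auto
        then show "x \<in> psums b2" by auto
      qed
    next
      assume "psums gs \<subseteq> psums b2"
      then show "psums (g # gs) \<subseteq> psums \<beta>" using pg pb by auto
    qed
    have B: "osums \<beta> \<subseteq> psums (g # gs) \<longleftrightarrow> osums b1 = {} \<and> osums b2 \<subseteq> psums gs"
    proof
      assume H: "osums \<beta> \<subseteq> psums (g # gs)"
      have "osums b1 = {}"
      proof (rule ccontr)
        assume "osums b1 \<noteq> {}"
        then obtain x where x: "x \<in> osums b1" by blast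
        then have "x \<in> psums (g # gs)" using H ob by auto
        moreover have "x < g" using x lto1 by blast
        ultimately show False using pg by auto
      qed
      moreover have "osums b2 \<subseteq> psums gs"
      proof
        fix y assume y: "y \<in> osums b2"
        then have "g + y \<in> psums (g # gs)" using H ob by auto
        moreover have "0 < y" using y pos_b2 by blast
        ultimately have "g + y \<in> (+) g ` psums gs" using pg by auto
        then show "y \<in> psums gs" by auto
      qed
      ultimately show "osums b1 = {} \<and> osums b2 \<subseteq> psums gs" ..
    next
      assume "osums b1 = {} \<and> osums b2 \<subseteq> psums gs"
      then show "osums \<beta> \<subseteq> psums (g # gs)" using ob pg by auto
    qed
    have "Scoef \<beta> (g # gs) = (if osums b1 = {} \<and> osums b2 \<subseteq> psums gs \<and> psums gs \<subseteq> psums b2 then cblock b1 * c b2 gs else 0)"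
      using gcomp A B cc psums_mo[OF b(1)] by (simp add: Scoef_def comp_le_def)
    also have "\<dots> = (if noOE b1 then cblock b1 * Scoef b2 gs else 0)"
      using gs_comp psums_mo[OF cb1(2)] by (auto simp: Scoef_def comp_le_def osums_empty_iff)
    finally show ?thesis by (simp add: b1_def b2_def)
  qed
qed

lemma SC_none:
  assumes g: "g > 0" and gs: "is_comp gs" and b: "is_comp \<beta>" "sum_list \<beta> = g + sum_list gs"
    and nk: "\<not> (\<exists>k\<le>length \<beta>. sum_list (take k \<beta>) = g)"
  shows "Scoef \<beta> (g # gs) = 0"
proof (cases "gs = []")
  case True
  then have "sum_list (take (length \<beta>) \<beta>) = g" using b(2) by simp
  then show ?thesis using nk by blast
next
  case False
  have "g \<notin> psums \<beta>"
  proof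
    assume "g \<in> psums \<beta>"
    then obtain k where kk: "g = sum_list (take k \<beta>)" "k < length \<beta>" by (auto simp: psums_def)
    then have "k \<le> length \<beta>" by simp
    then show False using nk kk(1) by blast
  qed
  moreover have "g \<in> psums (g # gs)" using False by (simp add: psums_Cons)
  ultimately have "\<not> comp_le (g # gs) \<beta>" by (auto simp: comp_le_def)
  then show ?thesis by (simp add: Scoef_def)
qed





definition Pc :: "nat list \<Rightarrow> ser" where "Pc \<beta> = prod_list (map Hp \<beta>)"
definition Hc :: "nat list \<Rightarrow> ser" where "Hc \<gamma> = prod_list (map Hh \<gamma>)"

lemma app_inj:
  assumes c: "is_comp (x @ y)" and s: "sum_list x = sum_list x'" and e: "x @ y = x' @ y'"
  shows "x = x' \<and> y = y'"
proof -
  have l1: "length x \<le> length (x @ y)" by simp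
  have l2: "length x' \<le> length (x @ y)" unfolding e by simp
  have t1: "sum_list (take (length x) (x @ y)) = sum_list x" by simp
  have t2: "sum_list (take (length x') (x @ y)) = sum_list x'" unfolding e by simp
  have "length x = length x'"
  proof (rule ccontr)
    assume "length x \<noteq> length x'"
    then consider "length x < length x'" | "length x' < length x" by linarith
    then show False
    proof cases
      case 1 then show False using sum_take_less[OF c 1 l2] t1 t2 s by simp
    next
      case 2 then show False using sum_take_less[OF c 2 l1] t1 t2 s by simp
    qed
  qed
  then show ?thesis using e by simp
qed

lemma comps0: "comps 0 = {[]}"
  using comp_sum0 by (auto simp: comps_def is_comp_def)

lemma expand: "is_comp \<gamma> \<Longrightarrow> Hc \<gamma> = (\<Sum>\<beta>\<in>comps (sum_list \<gamma>). rs (Scoef \<beta> \<gamma>) * Pc \<beta>)"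
proof (induct \<gamma>)
  case Nil
  show ?case by (simp add: comps0 Hc_def Pc_def Scoef_Nil rs_1)
next
  case (Cons g gs)
  have g: "0 < g" and gs: "is_comp gs" using Cons.prems by (simp_all add: is_comp_Cons)
  define N where "N = sum_list gs"
  define T where "T = (\<lambda>(x,y). x @ y) ` (comps g \<times> comps N)"
  have "(\<Sum>\<beta>\<in>comps (sum_list (g#gs)). rs (Scoef \<beta> (g#gs)) * Pc \<beta>) = (\<Sum>\<beta>\<in>T. rs (Scoef \<beta> (g#gs)) * Pc \<beta>)"
  proof (rule sum.mono_neutral_right)
    show "finite (comps (sum_list (g#gs)))" by (rule finite_comps)
    show "T \<subseteq> comps (sum_list (g#gs))" by (auto simp: T_def comps_def is_comp_def N_def)
    show "\<forall>\<beta>\<in>comps (sum_list (g#gs)) - T. rs (Scoef \<beta> (g#gs)) * Pc \<beta> = 0"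
    proof
      fix \<beta> assume b: "\<beta> \<in> comps (sum_list (g#gs)) - T"
      have bc: "is_comp \<beta>" "sum_list \<beta> = g + sum_list gs" using b by (auto simp: comps_def)
      have "\<not>(\<exists>k\<le>length \<beta>. sum_list (take k \<beta>) = g)"
      proof
        assume "\<exists>k\<le>length \<beta>. sum_list (take k \<beta>) = g"
        then obtain k where k: "k \<le> length \<beta>" "sum_list (take k \<beta>) = g" by blast
        have sd: "sum_list (take k \<beta>) + sum_list (drop k \<beta>) = sum_list \<beta>"
          by (simp only: sum_list_append[symmetric] append_take_drop_id)
        have "take k \<beta> \<in> comps g" using bc(1) k(2) by (auto simp: comps_def is_comp_def dest: in_set_takeD)
        moreover have "drop k \<beta> \<in> comps N" using bc sd k(2) by (auto simp: comps_def is_comp_def N_def dest: in_set_dropD)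
        ultimately have mem: "(take k \<beta>, drop k \<beta>) \<in> comps g \<times> comps N" by simp
        have "\<beta> \<in> T" unfolding T_def
          by (rule image_eqI[where x="(take k \<beta>, drop k \<beta>)"]) (simp_all only: mem case_prod_conv append_take_drop_id)
        with b show False by blast
      qed
      then show "rs (Scoef \<beta> (g#gs)) * Pc \<beta> = 0" using SC_none[OF g gs bc] by (simp add: rs_0)
    qed
  qed
  also have "\<dots> = (\<Sum>(x,y)\<in>comps g \<times> comps N. rs (Scoef (x@y) (g#gs)) * Pc (x@y))"
  proof (rule sum.reindex_cong[where l="\<lambda>(x,y). x @ y"])
    show "inj_on (\<lambda>(x,y). x @ y) (comps g \<times> comps N)"
    proof (rule inj_onI)
      fix a b assume a: "a \<in> comps g \<times> comps N" and b: "b \<in> comps g \<times> comps N"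
        and e: "(case a of (x,y) \<Rightarrow> x @ y) = (case b of (x,y) \<Rightarrow> x @ y)"
      obtain x y where axy: "a = (x,y)" by fastforce
      obtain x' y' where bxy: "b = (x',y')" by fastforce
      have "is_comp (x @ y)" using a axy by (auto simp: comps_def is_comp_def)
      moreover have "sum_list x = sum_list x'" using a b axy bxy by (simp add: comps_def)
      moreover have "x @ y = x' @ y'" using e axy bxy by simp
      ultimately show "a = b" using app_inj axy bxy by blast
    qed
    show "T = (\<lambda>(x,y). x @ y) ` (comps g \<times> comps N)" by (simp add: T_def)
    show "rs (Scoef ((\<lambda>(x,y). x @ y) q) (g#gs)) * Pc ((\<lambda>(x,y). x @ y) q) =
          (case q of (x,y) \<Rightarrow> rs (Scoef (x@y) (g#gs)) * Pc (x@y))" for q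
      by (cases q) simp
  qed
  also have "\<dots> = (\<Sum>(x,y)\<in>comps g \<times> comps N. (if noOE x then rs (cblock x) else 0) * Pc x * (rs (Scoef y gs) * Pc y))"
  proof (rule sum.cong[OF refl])
    fix q assume q: "q \<in> comps g \<times> comps N"
    obtain x y where qxy: "q = (x,y)" by fastforce
    have xc: "is_comp x" "sum_list x = g" and yc: "is_comp y" "sum_list y = N" using q qxy by (auto simp: comps_def)
    have bc: "is_comp (x @ y)" using xc yc by (auto simp: is_comp_def)
    have "Scoef (x @ y) (g # gs) = (if noOE x then cblock x * Scoef y gs else 0)"
      using SC_split[OF g gs bc, of "length x"] xc yc by (simp add: N_def)
    moreover have "Pc (x @ y) = Pc x * Pc y" by (simp add: Pc_def)
    ultimately show "(case q of (x,y) \<Rightarrow> rs (Scoef (x@y) (g#gs)) * Pc (x@y)) =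
          (case q of (x,y) \<Rightarrow> (if noOE x then rs (cblock x) else 0) * Pc x * (rs (Scoef y gs) * Pc y))"
      using qxy by (simp add: rs_mult rs_0 mult_ac)
  qed
  also have "\<dots> = (\<Sum>x\<in>comps g. (if noOE x then rs (cblock x) else 0) * Pc x) * (\<Sum>y\<in>comps N. rs (Scoef y gs) * Pc y)"
    by (simp add: sum_product sum.cartesian_product)
  also have "(\<Sum>x\<in>comps g. (if noOE x then rs (cblock x) else 0) * Pc x) = Hh g"
  proof -
    have "Hh g = (\<Sum>x\<in>{x\<in>comps g. noOE x}. rs (cblock x) * Pc x)" by (simp add: heart Pc_def)
    also have "\<dots> = (\<Sum>x\<in>comps g. if noOE x then rs (cblock x) * Pc x else 0)"
      by (rule sum.inter_filter[OF finite_comps])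
    also have "\<dots> = (\<Sum>x\<in>comps g. (if noOE x then rs (cblock x) else 0) * Pc x)"
      by (rule sum.cong) simp_all
    finally show ?thesis by simp
  qed
  also have "(\<Sum>y\<in>comps N. rs (Scoef y gs) * Pc y) = Hc gs" using Cons.hyps gs by (simp add: N_def)
  finally show ?case by (simp add: Hc_def)
qed

lemma Rep_Hc: "Rep_ser (Hc \<gamma>) = hc \<gamma>"
  by (induct \<gamma>) (simp_all add: Hc_def hc_def sprod_list_def one_ser.rep_eq Rep_mult Rep_Hh)

lemma Rep_Pc: "Rep_ser (Pc \<gamma>) = pc \<gamma>"
  by (induct \<gamma>) (simp_all add: Pc_def pc_def sprod_list_def one_ser.rep_eq Rep_mult Rep_Hp)

lemma hc_expand: "is_comp \<gamma> \<Longrightarrow> hc \<gamma> m = (\<Sum>\<beta>\<in>comps (sum_list \<gamma>). Scoef \<beta> \<gamma> * pc \<beta> m)"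
  using arg_cong[OF expand, of \<gamma> "\<lambda>x. Rep_ser x m"]
  by (simp add: Rep_Hc Rep_sum Rep_rs_mult Rep_Pc)


lemma psums_ge: "is_comp (a # xs) \<Longrightarrow> x \<in> psums (a # xs) \<Longrightarrow> a \<le> x"
  using psums_bound[of xs] by (auto simp: psums_Cons is_comp_Cons split: if_splits)

lemma psums_inj:
  "is_comp \<beta> \<Longrightarrow> is_comp \<gamma> \<Longrightarrow> sum_list \<beta> = sum_list \<gamma> \<Longrightarrow> psums \<beta> = psums \<gamma> \<Longrightarrow> \<beta> = \<gamma>"
proof (induct \<beta> arbitrary: \<gamma>)
  case Nil then show ?case by (metis comp_sum0 sum_list.Nil)
next
  case (Cons a xs)
  have a: "0 < a" "is_comp xs" using Cons.prems(1) by (simp_all add: is_comp_Cons)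
  have "\<gamma> \<noteq> []" using Cons.prems(3) a(1) by auto
  then obtain b ys where g: "\<gamma> = b # ys" by (cases \<gamma>) auto
  have b: "0 < b" "is_comp ys" using Cons.prems(2) g by (simp_all add: is_comp_Cons)
  show ?case
  proof (cases "xs = []")
    case True
    then have "psums \<gamma> = {}" using Cons.prems(4) by (simp add: psums_Cons)
    then have "ys = []" using g by (auto simp: psums_Cons split: if_splits)
    then show ?thesis using True g Cons.prems(3) by simp
  next
    case False
    have ysne: "ys \<noteq> []"
    proof
      assume "ys = []"
      then have "psums \<gamma> = {}" using g by (simp add: psums_Cons)
      moreover have "a \<in> psums (a # xs)" using False by (simp add: psums_Cons)
      ultimately show False using Cons.prems(4) by simp
    qed
    have P1: "psums (a # xs) = insert a ((+) a ` psums xs)" using False by (simp add: psums_Cons)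
    have P2: "psums \<gamma> = insert b ((+) b ` psums ys)" using ysne g by (simp add: psums_Cons)
    have "b \<in> psums (a # xs)" using Cons.prems(4) P2 by simp
    then have "a \<le> b" using psums_ge Cons.prems(1) by blast
    moreover have "a \<in> psums \<gamma>" by (metis P1 Cons.prems(4) insertI1)
    then have "b \<le> a" using psums_ge Cons.prems(2) g by blast
    ultimately have ab: "a = b" by simp
    have na: "a \<notin> (+) a ` psums xs"
    proof
      assume "a \<in> (+) a ` psums xs"
      then obtain x where x: "x \<in> psums xs" "a = a + x" by blast
      then have "x = 0" by simp
      with psums_bound[OF a(2) x(1)] show False by simp
    qed
    have nb: "a \<notin> (+) a ` psums ys"
    proof
      assume "a \<in> (+) a ` psums ys"
      then obtain x where x: "x \<in> psums ys" "a = a + x" by blast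
      then have "x = 0" by simp
      with psums_bound[OF b(2) x(1)] show False by simp
    qed
    have "(+) a ` psums xs = (+) a ` psums ys"
    proof -
      have "(+) a ` psums xs = psums (a # xs) - {a}" using P1 na by auto
      also have "\<dots> = psums \<gamma> - {a}" using Cons.prems(4) by simp
      also have "\<dots> = (+) a ` psums ys" using P2 nb ab by auto
      finally show ?thesis .
    qed
    then have "psums xs = psums ys" by (simp add: inj_image_eq_iff)
    moreover have "sum_list xs = sum_list ys" using Cons.prems(3) g ab by simp
    ultimately have "xs = ys" using Cons.hyps[OF a(2) b(2)] by blast
    then show ?thesis using g ab by simp
  qed
qed

definition pr :: "nat list set \<Rightarrow> (nat list \<Rightarrow> rat) \<Rightarrow> nat list \<Rightarrow> rat" where
  "pr A f \<beta> = (\<Sum>\<gamma>\<in>A. f \<gamma> * Scoef \<beta> \<gamma>)"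

lemma pair_pr: "finite A \<Longrightarrow> {\<gamma>. f \<gamma> \<noteq> 0} \<subseteq> A \<Longrightarrow> pair_S f \<beta> = pr A f \<beta>"
  unfolding pair_S_def pr_def by (rule sum.mono_neutral_left) auto

lemma Scoef_zero_if:
  assumes "is_comp \<beta>" "is_comp \<gamma>" "sum_list \<beta> = sum_list \<gamma>" "card (psums \<beta>) \<le> card (psums \<gamma>)" "\<beta> \<noteq> \<gamma>"
  shows "Scoef \<beta> \<gamma> = 0"
proof (rule ccontr)
  assume "Scoef \<beta> \<gamma> \<noteq> 0"
  then have "psums \<gamma> \<subseteq> psums \<beta>" using Scoef_nz by blast
  moreover have "card (psums \<gamma>) \<le> card (psums \<beta>)" using card_mono[OF finite_psums \<open>psums \<gamma> \<subseteq> psums \<beta>\<close>] .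
  ultimately have "psums \<gamma> = psums \<beta>" using assms(4) card_subset_eq[OF finite_psums] by (meson le_antisym)
  then have "\<gamma> = \<beta>" by (rule psums_inj[OF assms(2) assms(1) assms(3)[symmetric]])
  with assms(5) show False by simp
qed

lemma exist_sol:
  assumes "finite C"
  shows "C \<subseteq> comps n \<longrightarrow> (\<exists>f. {\<gamma>. f \<gamma> \<noteq> 0} \<subseteq> C \<and> (\<forall>\<beta>\<in>C. pr C f \<beta> = t \<beta>))"
  using assms
proof (induct C rule: finite_ranking_induct[where f="\<lambda>\<gamma>. card (psums \<gamma>)"])
  case empty
  show ?case by (rule impI, rule exI[of _ "\<lambda>_. 0"]) simp
next
  case (insert x C)
  show ?case
  proof
    assume sub: "insert x C \<subseteq> comps n"
    then obtain f' where f': "{\<gamma>. f' \<gamma> \<noteq> 0} \<subseteq> C" "\<forall>\<beta>\<in>C. pr C f' \<beta> = t \<beta>" using insert.hyps(3) by auto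
    show "\<exists>f. {\<gamma>. f \<gamma> \<noteq> 0} \<subseteq> insert x C \<and> (\<forall>\<beta>\<in>insert x C. pr (insert x C) f \<beta> = t \<beta>)"
    proof (cases "x \<in> C")
      case True
      then have "insert x C = C" by blast
      then show ?thesis using f' by auto
    next
      case False
      define f where "f = f'(x := t x - pr C f' x)"
      have xc: "is_comp x" "sum_list x = n" using sub by (auto simp: comps_def)
      have prC: "pr C f \<beta> = pr C f' \<beta>" for \<beta>
        unfolding pr_def f_def using False by (intro sum.cong) auto
      have prI: "pr (insert x C) f \<beta> = f x * Scoef \<beta> x + pr C f \<beta>" for \<beta>
        unfolding pr_def using insert.hyps(1) False by simp
      have "\<forall>\<beta>\<in>insert x C. pr (insert x C) f \<beta> = t \<beta>"
      proof
        fix \<beta> assume b: "\<beta> \<in> insert x C"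
        show "pr (insert x C) f \<beta> = t \<beta>"
        proof (cases "\<beta> = x")
          case True
          then show ?thesis using prI prC Scoef_diag[OF xc(1)] by (simp add: f_def)
        next
          case bx: False
          then have bC: "\<beta> \<in> C" using b by simp
          have bc: "is_comp \<beta>" "sum_list \<beta> = n" using sub bC by (auto simp: comps_def)
          have "Scoef \<beta> x = 0"
            using Scoef_zero_if[OF bc(1) xc(1) _ insert.hyps(2)[OF bC] bx] bc xc by simp
          then show ?thesis using prI prC f' bC by simp
        qed
      qed
      moreover have "{\<gamma>. f \<gamma> \<noteq> 0} \<subseteq> insert x C" using f' by (auto simp: f_def)
      ultimately show ?thesis by blast
    qed
  qed
qed

lemma Sstar_exists:
  assumes "is_comp \<alpha>"
  shows "\<exists>f. is_nsym f \<and> (\<forall>\<beta>. is_comp \<beta> \<longrightarrow> pair_S f \<beta> = (if \<beta> = \<alpha> then 1 else 0))"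
proof -
  let ?n = "sum_list \<alpha>"
  obtain f where f: "{\<gamma>. f \<gamma> \<noteq> 0} \<subseteq> comps ?n" "\<forall>\<beta>\<in>comps ?n. pr (comps ?n) f \<beta> = (if \<beta> = \<alpha> then 1 else 0)"
    using exist_sol[OF finite_comps, of ?n ?n "\<lambda>\<beta>. if \<beta> = \<alpha> then 1 else 0"] by auto
  have "is_nsym f"
    using f(1) finite_subset[OF f(1) finite_comps] by (auto simp: is_nsym_def comps_def)
  moreover have "pair_S f \<beta> = (if \<beta> = \<alpha> then 1 else 0)" if b: "is_comp \<beta>" for \<beta>
  proof -
    have "pair_S f \<beta> = pr (comps ?n) f \<beta>" using pair_pr[OF finite_comps f(1)] .
    also have "\<dots> = (if \<beta> = \<alpha> then 1 else 0)"
    proof (cases "sum_list \<beta> = ?n")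
      case True then show ?thesis using f(2) b by (simp add: comps_def)
    next
      case False
      have "Scoef \<beta> \<gamma> = 0" if "\<gamma> \<in> comps ?n" for \<gamma>
        using that False Scoef_nz[of \<beta> \<gamma>] by (auto simp: comps_def)
      then have "pr (comps ?n) f \<beta> = 0" by (simp add: pr_def)
      moreover have "\<beta> \<noteq> \<alpha>" using False by auto
      ultimately show ?thesis by simp
    qed
    finally show ?thesis .
  qed
  ultimately show ?thesis by blast
qed

lemma Sstar_unique:
  assumes f1: "is_nsym f1" "\<forall>\<beta>. is_comp \<beta> \<longrightarrow> pair_S f1 \<beta> = t \<beta>"
    and f2: "is_nsym f2" "\<forall>\<beta>. is_comp \<beta> \<longrightarrow> pair_S f2 \<beta> = t \<beta>"
  shows "f1 = f2"
proof (rule ccontr)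
  assume ne: "f1 \<noteq> f2"
  define A where "A = {\<gamma>. f1 \<gamma> \<noteq> 0} \<union> {\<gamma>. f2 \<gamma> \<noteq> 0}"
  have finA: "finite A" using f1(1) f2(1) by (simp add: A_def is_nsym_def)
  have compA: "is_comp \<gamma>" if "\<gamma> \<in> A" for \<gamma> using that f1(1) f2(1) by (auto simp: A_def is_nsym_def)
  define d where "d \<gamma> = f1 \<gamma> - f2 \<gamma>" for \<gamma>
  have prd: "pr A d \<beta> = 0" if "is_comp \<beta>" for \<beta>
  proof -
    have "pr A d \<beta> = pr A f1 \<beta> - pr A f2 \<beta>" by (simp add: pr_def d_def sum_subtractf left_diff_distrib)
    also have "pr A f1 \<beta> = pair_S f1 \<beta>" using pair_pr[OF finA] by (simp add: A_def)
    also have "pr A f2 \<beta> = pair_S f2 \<beta>" using pair_pr[OF finA] by (simp add: A_def)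
    finally show ?thesis using that f1(2) f2(2) by simp
  qed
  define D where "D = {\<gamma>\<in>A. d \<gamma> \<noteq> 0}"
  have finD: "finite D" using finA by (simp add: D_def)
  have "D \<noteq> {}"
  proof
    assume "D = {}"
    then have "f1 \<gamma> = f2 \<gamma>" for \<gamma> by (cases "\<gamma> \<in> A") (auto simp: D_def d_def A_def)
    with ne show False by auto
  qed
  define mn where "mn = Min ((\<lambda>\<gamma>. card (psums \<gamma>)) ` D)"
  have "mn \<in> (\<lambda>\<gamma>. card (psums \<gamma>)) ` D" unfolding mn_def using finD \<open>D \<noteq> {}\<close> by (intro Min_in) auto
  then obtain g0 where g0: "g0 \<in> D" "card (psums g0) = mn" by blast
  have minD: "mn \<le> card (psums \<gamma>)" if "\<gamma> \<in> D" for \<gamma> unfolding mn_def using finD that by (intro Min_le) auto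
  have g0A: "g0 \<in> A" and dg0: "d g0 \<noteq> 0" using g0 by (auto simp: D_def)
  have g0c: "is_comp g0" using compA g0A .
  have "pr A d g0 = d g0 * Scoef g0 g0 + (\<Sum>\<gamma>\<in>A - {g0}. d \<gamma> * Scoef g0 \<gamma>)"
    unfolding pr_def using finA g0A by (simp add: sum.remove)
  also have "(\<Sum>\<gamma>\<in>A - {g0}. d \<gamma> * Scoef g0 \<gamma>) = 0"
  proof (rule sum.neutral, rule ballI)
    fix \<gamma> assume g: "\<gamma> \<in> A - {g0}"
    show "d \<gamma> * Scoef g0 \<gamma> = 0"
    proof (cases "d \<gamma> = 0")
      case True then show ?thesis by simp
    next
      case False
      then have gD: "\<gamma> \<in> D" using g by (simp add: D_def)
      have "Scoef g0 \<gamma> = 0"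
      proof (rule ccontr)
        assume nz: "Scoef g0 \<gamma> \<noteq> 0"
        then have "sum_list \<gamma> = sum_list g0" using Scoef_nz by (auto simp: comps_def)
        moreover have "card (psums g0) \<le> card (psums \<gamma>)" using minD[OF gD] g0(2) by simp
        ultimately have "Scoef g0 \<gamma> = 0"
          using Scoef_zero_if[OF g0c compA[of \<gamma>]] g by auto
        with nz show False by simp
      qed
      then show ?thesis by simp
    qed
  qed
  finally have "pr A d g0 = d g0" using Scoef_diag[OF g0c] by simp
  with prd[OF g0c] dg0 show False by simp
qed

lemma Sstar_prop:
  assumes "is_comp \<alpha>"
  shows "is_nsym (Sstar \<alpha>) \<and> (\<forall>\<beta>. is_comp \<beta> \<longrightarrow> pair_S (Sstar \<alpha>) \<beta> = (if \<beta> = \<alpha> then 1 else 0))"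
proof -
  obtain f0 where f0: "is_nsym f0" "\<forall>\<beta>. is_comp \<beta> \<longrightarrow> pair_S f0 \<beta> = (if \<beta> = \<alpha> then 1 else 0)"
    using Sstar_exists[OF assms] by blast
  have "Sstar \<alpha> = f0" unfolding Sstar_def
  proof (rule the_equality)
    show "is_nsym f0 \<and> (\<forall>\<beta>. is_comp \<beta> \<longrightarrow> pair_S f0 \<beta> = (if \<beta> = \<alpha> then 1 else 0))"
      using f0 by blast
  next
    fix y assume y: "is_nsym y \<and> (\<forall>\<beta>. is_comp \<beta> \<longrightarrow> pair_S y \<beta> = (if \<beta> = \<alpha> then 1 else 0))"
    have y1: "is_nsym y" and y2: "\<forall>\<beta>. is_comp \<beta> \<longrightarrow> pair_S y \<beta> = (if \<beta> = \<alpha> then 1 else 0)"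
      using y by blast+
    show "y = f0" by (rule Sstar_unique[OF y1 y2 f0(1) f0(2)])
  qed
  then show ?thesis using f0 by simp
qed

theorem mainTheorem6:
  fixes \<alpha> :: "nat list"
  assumes "is_comp \<alpha>"
  shows "pi_map (Sstar \<alpha>) = pc \<alpha>"
proof
  fix m
  define f where "f = Sstar \<alpha>"
  have fp: "is_nsym f" "\<forall>\<beta>. is_comp \<beta> \<longrightarrow> pair_S f \<beta> = (if \<beta> = \<alpha> then 1 else 0)"
    using Sstar_prop[OF assms] by (simp_all add: f_def)
  define F where "F = {\<gamma>. f \<gamma> \<noteq> 0}"
  have finF: "finite F" and compF: "\<And>\<gamma>. \<gamma> \<in> F \<Longrightarrow> is_comp \<gamma>" using fp(1) by (auto simp: is_nsym_def F_def)
  define B where "B = (\<Union>\<gamma>\<in>F. comps (sum_list \<gamma>)) \<union> {\<alpha>}"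
  have finB: "finite B" using finF by (simp add: B_def finite_comps)
  have compB: "is_comp \<beta>" if "\<beta> \<in> B" for \<beta> using that assms by (auto simp: B_def comps_def)
  have inner: "hc \<gamma> m = (\<Sum>\<beta>\<in>B. Scoef \<beta> \<gamma> * pc \<beta> m)" if g: "\<gamma> \<in> F" for \<gamma>
  proof -
    have "hc \<gamma> m = (\<Sum>\<beta>\<in>comps (sum_list \<gamma>). Scoef \<beta> \<gamma> * pc \<beta> m)" using hc_expand[OF compF[OF g]] .
    also have "\<dots> = (\<Sum>\<beta>\<in>B. Scoef \<beta> \<gamma> * pc \<beta> m)"
    proof (rule sum.mono_neutral_left[OF finB])
      show "comps (sum_list \<gamma>) \<subseteq> B" using g by (auto simp: B_def)
      show "\<forall>\<beta>\<in>B - comps (sum_list \<gamma>). Scoef \<beta> \<gamma> * pc \<beta> m = 0"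
      proof
        fix \<beta> assume b: "\<beta> \<in> B - comps (sum_list \<gamma>)"
        have "Scoef \<beta> \<gamma> = 0"
        proof (rule ccontr)
          assume "Scoef \<beta> \<gamma> \<noteq> 0"
          then have "sum_list \<gamma> = sum_list \<beta>" using Scoef_nz by (auto simp: comps_def)
          moreover have "is_comp \<beta>" using compB b by blast
          ultimately have "\<beta> \<in> comps (sum_list \<gamma>)" by (simp add: comps_def)
          with b show False by blast
        qed
        then show "Scoef \<beta> \<gamma> * pc \<beta> m = 0" by simp
      qed
    qed
    finally show ?thesis .
  qed
  have "pi_map f m = (\<Sum>\<gamma>\<in>F. f \<gamma> * hc \<gamma> m)" by (simp add: pi_map_def F_def)
  also have "\<dots> = (\<Sum>\<gamma>\<in>F. \<Sum>\<beta>\<in>B. f \<gamma> * Scoef \<beta> \<gamma> * pc \<beta> m)"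
    using inner by (simp add: sum_distrib_left mult.assoc)
  also have "\<dots> = (\<Sum>\<beta>\<in>B. \<Sum>\<gamma>\<in>F. f \<gamma> * Scoef \<beta> \<gamma> * pc \<beta> m)" by (rule sum.swap)
  also have "\<dots> = (\<Sum>\<beta>\<in>B. pair_S f \<beta> * pc \<beta> m)"
    by (simp add: pair_S_def F_def sum_distrib_right)
  also have "\<dots> = (\<Sum>\<beta>\<in>B. (if \<beta> = \<alpha> then pc \<beta> m else 0))"
    using fp(2) compB by (intro sum.cong) auto
  also have "\<dots> = pc \<alpha> m" using finB by (simp add: B_def)
  finally show "pi_map (Sstar \<alpha>) m = pc \<alpha> m" by (simp add: f_def)
qed


end
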